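(* Let $(\rho_t)_{t\ge0}$ be an environment and $B$ a collision kernel satisfying (LBP). For any $s\ge0$ and starting type $v_0$, the linearized Kac process in environment $(\rho_t)$ starting from $v_0$ at time $s$ almost surely does not explode (the time of the $n$-th branching event tends to $\infty$ as $n\to\infty$). Moreover, for every $p\in[2,\infty)$ there is a constant $c(p)<\infty$ such that for all $v_0\in\mathbb{R}^d$ and all $t\ge s$, $$E_{(s,v_0)}\langle1+|v|^p,\Lambda_t\rangle\le(1+|v_0|^p)\exp\Big\{c(p)\int_s^t\langle1+|v|^{p+1},\rho_r\rangle\,dr\Big\},$$ and one can take $c(2)=8$.
   Context: Fix $d\ge2$; write $\langle f,\mu\rangle=\int f\,d\mu$. A collision kernel is a finite measurable kernel $B(v,d\sigma)$ from $\mathbb{R}^d$ to $S^{d-1}$ such that for every $u\in S^{d-1}$, $B(u,\cdot)$ is a probability measure supported on $S^{d-1}\setminus\{-u,u\}$; condition (LBP): $B(\lambda u,\cdot)=\lambda B(u,\cdot)$ for $\lambda\ge0$, $u\in S^{d-1}$, and $B(Ru,\cdot)=B(u,\cdot)\circ R^{-1}$ for every isometry $R$ of $S^{d-1}$. Post-collision velocities: $v'=\tfrac{v+v_*}{2}+\tfrac{|v-v_*|}{2}\sigma$, $v'_*=\tfrac{v+v_*}{2}-\tfrac{|v-v_*|}{2}\sigma$. An environment is a measurable family $(\rho_t)_{t\ge0}$ of measures on $\mathbb{R}^d$ with $\langle1,\rho_t\rangle\le1$ and $\langle|v|^2,\rho_t\rangle\le1$ for all $t$, and $\int_0^t\langle|v|^3,\rho_r\rangle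 dr<\infty$ for all $t$. The linearized Kac process in environment $(\rho_t)$ starting from $v_0\in\mathbb{R}^d$ at time $s$ is the continuous-time branching particle system with types in $\mathbb{R}^d\times\{-1,1\}$ started at time $s$ with one particle of type $(v_0,+1)$, in which each particle of type $(v,\epsilon)$, at rate $2\rho_t(dv_* )B(v-v_*,d\sigma)\,dt$ (over $v_*\in\mathbb{R}^d$, $\sigma\in S^{d-1}$), dies and is replaced by three particles of types $(v'(v,v_*,\sigma),\epsilon)$, $(v'_*(v,v_*,\sigma),\epsilon)$ and $(v_*,-\epsilon)$. $\Lambda_t$ denotes the (unnormalized) empirical measure on $\mathbb{R}^d$ of the velocities of all particles alive at time $t$ (ignoring signs), and $E_{(s,v_0)}$ denotes expectation for this process (the environment being fixed). *)

theory Defs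
  imports "HOL-Probability.Probability"
begin

text \<open>A collision kernel: a finite measurable kernel from the velocity space to the unit
  sphere (measures are taken on the Borel sets of the whole space and required to be
  concentrated on the sphere); for unit u, B u is a probability measure concentrated on
  the sphere minus {u, -u}.\<close>
definition collision_kernel :: "('a::euclidean_space \<Rightarrow> 'a measure) \<Rightarrow> bool" where
  "collision_kernel B \<longleftrightarrow>
     (\<forall>v. sets (B v) = sets (borel :: 'a measure)) \<and>
     (\<forall>v. emeasure (B v) (space (B v)) < \<infinity>) \<and>
     (\<forall>v. emeasure (B v) (- sphere 0 1) = 0) \<and>
     (\<forall>A \<in> sets (borel :: 'a measure). (\<lambda>v. emeasure (B v) A) \<in> borel_measurable borel) \<and>
     (\<forall>u \<in> sphere (0::'a) 1. emeasure (B u) (space (B u)) = 1 \<and>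
                              emeasure (B u) (- (sphere 0 1 - {u, -u})) = 0)"

definition LBP :: "('a::euclidean_space \<Rightarrow> 'a measure) \<Rightarrow> bool" where
  "LBP B \<longleftrightarrow>
     (\<forall>c::real. \<forall>u \<in> sphere (0::'a) 1. c \<ge> 0 \<longrightarrow> B (c *\<^sub>R u) = scale_measure (ennreal c) (B u)) \<and>
     (\<forall>R :: 'a \<Rightarrow> 'a.
        (\<forall>x \<in> sphere 0 1. \<forall>y \<in> sphere 0 1. dist (R x) (R y) = dist x y) \<and>
        R ` sphere 0 1 = sphere 0 1 \<longrightarrow>
        (\<forall>u \<in> sphere 0 1. \<forall>A \<in> sets (borel :: 'a measure). A \<subseteq> sphere 0 1 \<longrightarrow>
            emeasure (B (R u)) A = emeasure (B u) (R -` A \<inter> sphere 0 1)))"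

definition environment :: "(real \<Rightarrow> 'a::euclidean_space measure) \<Rightarrow> bool" where
  "environment \<rho> \<longleftrightarrow>
     (\<forall>t. sets (\<rho> t) = sets (borel :: 'a measure)) \<and>
     (\<forall>A \<in> sets (borel :: 'a measure).
         (\<lambda>t. emeasure (\<rho> t) A) \<in> borel_measurable (restrict_space borel {0..})) \<and>
     (\<forall>t\<ge>0. emeasure (\<rho> t) (space (\<rho> t)) \<le> 1) \<and>
     (\<forall>t\<ge>0. (\<integral>\<^sup>+ v. ennreal (norm v ^ 2) \<partial>\<rho> t) \<le> 1) \<and>
     (\<forall>t\<ge>0. (\<integral>\<^sup>+ r \<in> {0..t}. (\<integral>\<^sup>+ v. ennreal (norm v ^ 3) \<partial>\<rho> r) \<partial>lborel) < \<infinity>)"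

text \<open>States of the embedded jump chain: (time of the last branching event, number k of
  living particles, particles; only the slots 0..k-1 are meaningful). A particle is a
  velocity together with a sign (True = +1, False = -1). Time \<infinity> means that no
  further branching events occur.\<close>
type_synonym 'a kstate = "ereal \<times> nat \<times> (nat \<Rightarrow> 'a \<times> bool)"

definition kstate_space :: "'a::euclidean_space kstate measure" where
  "kstate_space = borel \<Otimes>\<^sub>M count_space UNIV \<Otimes>\<^sub>M
                  PiM UNIV (\<lambda>_. borel \<Otimes>\<^sub>M count_space UNIV)"

definition vpost :: "'a::euclidean_space \<Rightarrow> 'a \<Rightarrow> 'a \<Rightarrow> 'a" where
  "vpost v w \<sigma> = (1/2) *\<^sub>R (v + w) + (norm (v - w) / 2) *\<^sub>R \<sigma>"

definition vpost_star :: "'a::euclidean_space \<Rightarrow> 'a \<Rightarrow> 'a \<Rightarrow> 'a" where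
  "vpost_star v w \<sigma> = (1/2) *\<^sub>R (v + w) - (norm (v - w) / 2) *\<^sub>R \<sigma>"

definition branch :: "(nat \<Rightarrow> 'a::euclidean_space \<times> bool) \<Rightarrow> nat \<Rightarrow> nat \<Rightarrow> 'a \<Rightarrow> 'a
                       \<Rightarrow> (nat \<Rightarrow> 'a \<times> bool)" where
  "branch f k i w \<sigma> =
     (let v = fst (f i); e = snd (f i) in
      f(i := (vpost v w \<sigma>, e), k := (vpost_star v w \<sigma>, e), Suc k := (w, \<not> e)))"

definition kac_rate :: "('a::euclidean_space \<Rightarrow> 'a measure) \<Rightarrow> (real \<Rightarrow> 'a measure)
                        \<Rightarrow> real \<Rightarrow> 'a \<Rightarrow> ennreal" where
  "kac_rate B \<rho> r v = (\<integral>\<^sup>+ w. 2 * emeasure (B (v - w)) (space (B (v - w))) \<partial>\<rho> r)"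

definition kac_total_rate :: "('a::euclidean_space \<Rightarrow> 'a measure) \<Rightarrow> (real \<Rightarrow> 'a measure)
                        \<Rightarrow> real \<Rightarrow> nat \<Rightarrow> (nat \<Rightarrow> 'a \<times> bool) \<Rightarrow> ennreal" where
  "kac_total_rate B \<rho> r k f = (\<Sum>i<k. kac_rate B \<rho> r (fst (f i)))"

definition exp_neg :: "ennreal \<Rightarrow> ennreal" where
  "exp_neg L = (if L = \<infinity> then 0 else ennreal (exp (- enn2real L)))"

text \<open>The transition operator of the jump chain, applied to a nonnegative test function g:
  the next branching time u > t has density Q(u) exp(-\<integral>_t^u Q), and at time u the
  event (particle i, environment velocity w, direction \<sigma>) occurs with intensity
  2 \<rho>_u(dw) B(v_i - w, d\<sigma>); with probability exp(-\<integral>_t^\<infinity> Q) no further event occurs.\<close>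
definition kac_step :: "('a::euclidean_space \<Rightarrow> 'a measure) \<Rightarrow> (real \<Rightarrow> 'a measure)
                        \<Rightarrow> ('a kstate \<Rightarrow> ennreal) \<Rightarrow> 'a kstate \<Rightarrow> ennreal" where
  "kac_step B \<rho> g st =
     (case st of (\<tau>, k, f) \<Rightarrow>
       (case \<tau> of
          ereal t \<Rightarrow>
            (\<integral>\<^sup>+ u \<in> {t<..}.
                exp_neg (\<integral>\<^sup>+ r \<in> {t..u}. kac_total_rate B \<rho> r k f \<partial>lborel) *
                (\<Sum>i<k. \<integral>\<^sup>+ w. \<integral>\<^sup>+ \<sigma>. 2 * g (ereal u, Suc (Suc k), branch f k i w \<sigma>)
                                      \<partial>B (fst (f i) - w) \<partial>\<rho> u) \<partial>lborel)
            + exp_neg (\<integral>\<^sup>+ r \<in> {t..}. kac_total_rate B \<rho> r k f \<partial>lborel) * g (\<infinity>, k, f)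
        | _ \<Rightarrow> g st))"

definition kac_history :: "'w measure \<Rightarrow> (nat \<Rightarrow> 'w \<Rightarrow> 'a::euclidean_space kstate) \<Rightarrow> nat
                           \<Rightarrow> 'w set set" where
  "kac_history M X n =
     sigma_sets (space M) (\<Union>i\<le>n. {X i -` A \<inter> space M | A. A \<in> sets kstate_space})"

text \<open>(M, X) is a realization of the jump chain of the linearized Kac process in
  environment \<rho> started at time s from one particle of type (v0, +1): X n is the state
  right after the n-th branching event, and X is Markov (w.r.t. its natural filtration)
  with transition operator kac_step.\<close>
definition lin_kac_process :: "('a::euclidean_space \<Rightarrow> 'a measure) \<Rightarrow> (real \<Rightarrow> 'a measure)
      \<Rightarrow> real \<Rightarrow> 'a \<Rightarrow> 'w measure \<Rightarrow> (nat \<Rightarrow> 'w \<Rightarrow> 'a kstate) \<Rightarrow> bool" where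
  "lin_kac_process B \<rho> s v0 M X \<longleftrightarrow>
     prob_space M \<and>
     (\<forall>n. X n \<in> measurable M kstate_space) \<and>
     (\<forall>\<omega> \<in> space M. X 0 \<omega> = (ereal s, 1, \<lambda>_. (v0, True))) \<and>
     (\<forall>n g A. g \<in> borel_measurable kstate_space \<longrightarrow> A \<in> kac_history M X n \<longrightarrow>
        (\<integral>\<^sup>+ \<omega> \<in> A. g (X (Suc n) \<omega>) \<partial>M) = (\<integral>\<^sup>+ \<omega> \<in> A. kac_step B \<rho> g (X n \<omega>) \<partial>M))"

text \<open>The pairing of a test function h with the empirical measure \<Lambda>_t of velocities of
  the particles alive at time t (zero on explosion paths, a null set).\<close>
definition kac_pairing :: "(nat \<Rightarrow> 'w \<Rightarrow> 'a kstate) \<Rightarrow> ('a \<Rightarrow> real) \<Rightarrow> real \<Rightarrow> 'w \<Rightarrow> ennreal" where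
  "kac_pairing X h t \<omega> =
     (\<Sum>n. if fst (X n \<omega>) \<le> ereal t \<and> ereal t < fst (X (Suc n) \<omega>)
          then (\<Sum>i < fst (snd (X n \<omega>)). ennreal (h (fst (snd (snd (X n \<omega>)) i))))
          else 0)"

definition kac_moment_bound :: "('a::euclidean_space \<Rightarrow> 'a measure) \<Rightarrow> (real \<Rightarrow> 'a measure)
      \<Rightarrow> real \<Rightarrow> 'a \<Rightarrow> 'w measure \<Rightarrow> (nat \<Rightarrow> 'w \<Rightarrow> 'a kstate) \<Rightarrow> real \<Rightarrow> real \<Rightarrow> real \<Rightarrow> bool"
  where
  "kac_moment_bound B \<rho> s v0 M X p c t \<longleftrightarrow>
     (let I = (\<integral>\<^sup>+ r \<in> {s..t}. (\<integral>\<^sup>+ v. ennreal (1 + norm v powr (p + 1)) \<partial>\<rho> r) \<partial>lborel) in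
      I < \<infinity> \<longrightarrow>
      (\<integral>\<^sup>+ \<omega>. kac_pairing X (\<lambda>v. 1 + norm v powr p) t \<omega> \<partial>M)
        \<le> ennreal ((1 + norm v0 powr p) * exp (c * enn2real I)))"

end

theory Submission
  imports Defs
begin


lemma nn_integral_superadd:
  "integral\<^sup>N M f + integral\<^sup>N M g \<le> (\<integral>\<^sup>+ x. f x + g x \<partial>M)"
proof -
  let ?A = "{s. simple_function M s \<and> s \<le> f}"
  let ?B = "{s. simple_function M s \<and> s \<le> g}"
  have neA: "?A \<noteq> {}" proof - have "(\<lambda>_. 0) \<in> ?A" by (auto simp: le_fun_def) thus ?thesis by blast qed
  have neB: "?B \<noteq> {}" proof - have "(\<lambda>_. 0) \<in> ?B" by (auto simp: le_fun_def) thus ?thesis by blast qed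
  have "integral\<^sup>N M f + integral\<^sup>N M g = (SUP s\<in>?A. integral\<^sup>S M s) + (SUP s\<in>?B. integral\<^sup>S M s)"
    unfolding nn_integral_def ..
  also have "\<dots> = (SUP s\<in>?A. integral\<^sup>S M s + (SUP s'\<in>?B. integral\<^sup>S M s'))"
    using neA by (simp add: ennreal_SUP_add_left)
  also have "\<dots> = (SUP s\<in>?A. SUP s'\<in>?B. integral\<^sup>S M s + integral\<^sup>S M s')"
    using neB by (simp add: ennreal_SUP_add_right)
  also have "\<dots> \<le> (\<integral>\<^sup>+ x. f x + g x \<partial>M)"
  proof (intro SUP_least)
    fix s s' assume s: "s \<in> ?A" and s': "s' \<in> ?B"
    have "integral\<^sup>S M s + integral\<^sup>S M s' = integral\<^sup>S M (\<lambda>x. s x + s' x)"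
      using s s' by (simp add: simple_integral_add)
    also have "\<dots> \<le> (\<integral>\<^sup>+ x. f x + g x \<partial>M)"
      unfolding nn_integral_def
      by (rule SUP_upper) (use s s' in \<open>auto simp: le_fun_def intro: add_mono\<close>)
    finally show "integral\<^sup>S M s + integral\<^sup>S M s' \<le> (\<integral>\<^sup>+ x. f x + g x \<partial>M)" .
  qed
  finally show ?thesis .
qed

lemma nn_integral_cmult_le:
  "c * integral\<^sup>N M f \<le> (\<integral>\<^sup>+ x. c * f x \<partial>M)"
proof -
  let ?A = "{s. simple_function M s \<and> s \<le> f}"
  have "c * integral\<^sup>N M f = (SUP s\<in>?A. c * integral\<^sup>S M s)"
    unfolding nn_integral_def by (simp add: SUP_mult_left_ennreal)
  also have "\<dots> \<le> (\<integral>\<^sup>+ x. c * f x \<partial>M)"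
  proof (intro SUP_least)
    fix s assume s: "s \<in> ?A"
    have "c * integral\<^sup>S M s = integral\<^sup>S M (\<lambda>x. c * s x)"
      using s by (simp add: simple_integral_mult)
    also have "\<dots> \<le> (\<integral>\<^sup>+ x. c * f x \<partial>M)"
      unfolding nn_integral_def
      by (rule SUP_upper) (use s in \<open>auto simp: le_fun_def intro: mult_left_mono\<close>)
    finally show "c * integral\<^sup>S M s \<le> (\<integral>\<^sup>+ x. c * f x \<partial>M)" .
  qed
  finally show ?thesis .
qed


lemma level_bound:
  fixes g :: "real \<Rightarrow> ennreal" and a z :: real
  assumes g[measurable]: "g \<in> borel_measurable borel"
    and D: "D \<subseteq> {a<..}" "\<forall>u\<in>D. {a<..u} \<subseteq> D"
  defines "Gf \<equiv> \<lambda>u. \<integral>\<^sup>+ r. g r * indicator {a<..u} r \<partial>lborel"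
  shows "(\<integral>\<^sup>+ u. g u * indicator D u * indicator {u. Gf u < ennreal z} u \<partial>lborel) \<le> ennreal z"
proof -
  define S where "S = {u\<in>D. Gf u < ennreal z}"
  have Gmono: "Gf q \<le> Gf v" if "q \<le> v" for q v
    unfolding Gf_def using that
    by (intro nn_integral_mono) (auto simp: indicator_def)
  define Qs where "Qs = \<rat> \<inter> S"
  define Mx where "Mx = {u\<in>S. \<forall>v\<in>S. v \<le> u}"
  obtain m where Mxm: "Mx \<subseteq> {m}"
  proof (cases "Mx = {}")
    case True then show ?thesis using that by blast
  next
    case False
    then obtain m where m: "m \<in> Mx" by blast
    have "Mx \<subseteq> {m}"
    proof
      fix u assume u: "u \<in> Mx"
      have "u \<le> m" "m \<le> u" using u m unfolding Mx_def by auto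
      then show "u \<in> {m}" by auto
    qed
    then show ?thesis using that by blast
  qed
  have AEMx: "AE u in lborel. u \<notin> Mx"
    using AE_lborel_singleton[of m] by eventually_elim (use Mxm in auto)
  define N where "N = density lborel g"
  have sN: "sets N = sets borel" by (simp add: N_def)
  have intN: "\<And>A. A \<in> sets borel \<Longrightarrow> (\<integral>\<^sup>+ u. g u * indicator A u \<partial>lborel) = emeasure N A"
    by (simp add: N_def emeasure_density)
  show ?thesis
  proof (cases "Qs = {}")
    case True
    have "AE u in lborel. g u * indicator D u * indicator {u. Gf u < ennreal z} u \<le> 0"
      using AEMx
    proof eventually_elim
      case (elim u)
      show ?case
      proof (cases "u \<in> S")
        case True
        with elim obtain v where v: "v \<in> S" "u < v" unfolding Mx_def by (auto simp: not_le)
        then obtain q where q: "q \<in> \<rat>" "u < q" "q < v" using Rats_dense_in_real by blast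
        have au: "a < u" using True D unfolding S_def by auto
        have "q \<in> {a<..v}" using au q by auto
        moreover have "v \<in> D" using v unfolding S_def by auto
        ultimately have "q \<in> D" using D by blast
        moreover have "Gf q < ennreal z" using Gmono[of q v] v q unfolding S_def by auto
        ultimately have "q \<in> Qs" using q unfolding Qs_def S_def by auto
        with \<open>Qs = {}\<close> show ?thesis by auto
      qed (auto simp: S_def indicator_def)
    qed
    from nn_integral_mono_AE[OF this] show ?thesis by simp
  next
    case False
    have cQs: "countable Qs" unfolding Qs_def using countable_rat by auto
    define qs where "qs = from_nat_into Qs"
    have qsQ: "qs i \<in> Qs" for i unfolding qs_def using False by (rule from_nat_into)
    have Qqs: "Qs = range qs" unfolding qs_def using range_from_nat_into[OF False cQs] by simp
    define A where "A n = (\<Union>i\<le>n. {a<..qs i})" for n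
    have incA: "incseq A" unfolding A_def incseq_def by (auto intro!: bexI[where P="\<lambda>i. _ \<le> qs i"] dest: order_trans)
    have Ameas: "A n \<in> sets borel" for n unfolding A_def by auto
    have Abound: "emeasure N (A n) \<le> ennreal z" for n
    proof -
      obtain j where j: "j \<le> n" "\<forall>i\<le>n. qs i \<le> qs j"
      proof -
        have fin: "finite (qs ` {..n})" "qs ` {..n} \<noteq> {}" by auto
        then have "Max (qs ` {..n}) \<in> qs ` {..n}" by (rule Max_in)
        then obtain j where "j \<le> n" "qs j = Max (qs ` {..n})" by (metis (no_types, lifting) atMost_iff imageE)
        moreover have "\<forall>i\<le>n. qs i \<le> Max (qs ` {..n})" using fin by auto
        ultimately show ?thesis using that by auto
      qed
      have "A n \<subseteq> {a<..qs j}" unfolding A_def using j by auto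
      then have "emeasure N (A n) \<le> emeasure N {a<..qs j}"
        by (intro emeasure_mono) (auto simp: sN)
      also have "\<dots> = Gf (qs j)" unfolding Gf_def by (simp add: intN)
      also have "\<dots> < ennreal z" using qsQ[of j] unfolding Qs_def S_def by auto
      finally show ?thesis by simp
    qed
    have "AE u in lborel. g u * indicator D u * indicator {u. Gf u < ennreal z} u \<le> g u * indicator (\<Union>n. A n) u"
      using AEMx
    proof eventually_elim
      case (elim u)
      show ?case
      proof (cases "u \<in> S")
        case True
        with elim obtain v where v: "v \<in> S" "u < v" unfolding Mx_def by (auto simp: not_le)
        then obtain q where q: "q \<in> \<rat>" "u < q" "q < v" using Rats_dense_in_real by blast
        have au: "a < u" using True D unfolding S_def by auto
        have "q \<in> {a<..v}" using au q by auto
        moreover have "v \<in> D" using v unfolding S_def by auto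
        ultimately have "q \<in> D" using D by blast
        moreover have "Gf q < ennreal z" using Gmono[of q v] v q unfolding S_def by auto
        ultimately have "q \<in> Qs" using q unfolding Qs_def S_def by auto
        then obtain i where "q = qs i" using Qqs by auto
        moreover have "a < u" using True D unfolding S_def by auto
        ultimately have "u \<in> A i" unfolding A_def using q by (auto intro!: bexI[of _ i])
        then show ?thesis by (auto simp: indicator_def)
      qed (auto simp: S_def indicator_def)
    qed
    then have "(\<integral>\<^sup>+ u. g u * indicator D u * indicator {u. Gf u < ennreal z} u \<partial>lborel)
        \<le> (\<integral>\<^sup>+ u. g u * indicator (\<Union>n. A n) u \<partial>lborel)"
      by (rule nn_integral_mono_AE)
    also have "\<dots> = emeasure N (\<Union>n. A n)" using Ameas by (intro intN) auto
    also have "\<dots> = (SUP n. emeasure N (A n))"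
      using incA Ameas by (intro SUP_emeasure_incseq[symmetric]) (auto simp: sN)
    also have "\<dots> \<le> ennreal z" using Abound by (intro SUP_least) auto
    finally show ?thesis .
  qed
qed


lemma lim_exp_neg: "((\<lambda>z::real. exp (-z)) \<longlongrightarrow> 0) at_top"
  using tendsto_power_div_exp_0[of 0] by (simp add: exp_minus inverse_eq_divide)

lemma lim_F2: "((\<lambda>z::real. -((1+z)*exp(-z))) \<longlongrightarrow> 0) at_top"
proof -
  have "((\<lambda>z::real. -(z ^ 0 / exp z + z ^ 1 / exp z)) \<longlongrightarrow> -(0 + 0)) at_top"
    by (intro tendsto_intros tendsto_power_div_exp_0)
  then show ?thesis by (simp add: exp_minus field_simps)
qed

lemma E1: "(\<integral>\<^sup>+ z. ennreal (exp (-z)) * indicator {x<..} z \<partial>lborel) = ennreal (exp (-x))"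
proof -
  have "(\<integral>\<^sup>+ z. ennreal (exp (-z)) * indicator {x<..} z \<partial>lborel)
      = (\<integral>\<^sup>+ z. ennreal (exp (-z)) * indicator {x..} z \<partial>lborel)"
    by (intro nn_integral_cong_AE) (use AE_lborel_singleton[of x] in \<open>eventually_elim, auto simp: indicator_def\<close>)
  also have "\<dots> = ennreal (0 - (- exp (-x)))"
    by (rule nn_integral_FTC_atLeast[where F="\<lambda>z. - exp (-z)"])
       (auto intro!: derivative_eq_intros simp: lim_exp_neg[THEN tendsto_minus, simplified])
  finally show ?thesis by simp
qed

lemma exp_neg_layer:
  "exp_neg x = (\<integral>\<^sup>+ z. ennreal (exp (-z)) * indicator {z. x < ennreal z} z \<partial>lborel)"
proof (cases x)
  case (real y)
  then have "{z. x < ennreal z} = {y<..}" by (auto simp: ennreal_less_iff)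
  then show ?thesis using real by (simp add: E1 exp_neg_def)
next
  case top
  then show ?thesis by (simp add: exp_neg_def)
qed

lemma L4: "(\<integral>\<^sup>+ z. ennreal (exp (-z)) * min (ennreal z) T * indicator {0<..} z \<partial>lborel) + exp_neg T = 1"
proof (cases T)
  case top
  have "(\<integral>\<^sup>+ z. ennreal (exp (-z)) * min (ennreal z) T * indicator {0<..} z \<partial>lborel)
     = (\<integral>\<^sup>+ z. ennreal (z * exp (-z)) * indicator {0..} z \<partial>lborel)"
    using AE_lborel_singleton[of 0]
    by (intro nn_integral_cong_AE) (eventually_elim, auto simp: top indicator_def ennreal_mult' mult.commute)
  also have "\<dots> = ennreal (0 - (-((1+0)*exp(-0))))"
    by (rule nn_integral_FTC_atLeast[where F="\<lambda>z. -((1+z)*exp(-z))"])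
       (use lim_F2 in \<open>auto intro!: derivative_eq_intros simp: ring_distribs\<close>)
  finally show ?thesis by (simp add: top exp_neg_def)
next
  case (real t)
  have "(\<integral>\<^sup>+ z. ennreal (exp (-z)) * min (ennreal z) T * indicator {0<..} z \<partial>lborel)
     = (\<integral>\<^sup>+ z. ennreal (z * exp (-z)) * indicator {0..t} z + ennreal t * (ennreal (exp (-z)) * indicator {t<..} z) \<partial>lborel)"
    using AE_lborel_singleton[of 0]
  proof (intro nn_integral_cong_AE, eventually_elim)
    fix z :: real assume "z \<noteq> 0"
    show "ennreal (exp (-z)) * min (ennreal z) T * indicator {0<..} z
      = ennreal (z * exp (-z)) * indicator {0..t} z + ennreal t * (ennreal (exp (-z)) * indicator {t<..} z)"
    proof (cases "0 < z")
      case True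
      show ?thesis
      proof (cases "z \<le> t")
        case True
        then have "min (ennreal z) T = ennreal z" using real by (simp add: min_def)
        then show ?thesis using True \<open>0 < z\<close> by (simp add: ennreal_mult mult.commute)
      next
        case False
        then have "min (ennreal z) T = ennreal t" using real \<open>0<z\<close> by (simp add: min_def)
        then show ?thesis using False \<open>0 < z\<close> by (simp add: mult.commute)
      qed
    next
      case False
      then show ?thesis using \<open>z \<noteq> 0\<close> real by (simp add: indicator_def)
    qed
  qed
  also have "\<dots> = (\<integral>\<^sup>+ z. ennreal (z * exp (-z)) * indicator {0..t} z \<partial>lborel) + ennreal t * ennreal (exp (-t))"
    by (subst nn_integral_add) (auto simp: nn_integral_cmult E1)
  also have "(\<integral>\<^sup>+ z. ennreal (z * exp (-z)) * indicator {0..t} z \<partial>lborel)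
       = ennreal ((-((1+t)*exp(-t))) - (-((1+0)*exp(-0))))"
    by (rule nn_integral_FTC_Icc[where F="\<lambda>z. -((1+z)*exp(-z))"])
       (use real in \<open>auto intro!: derivative_eq_intros simp: algebra_simps\<close>)
  finally have eq: "(\<integral>\<^sup>+ z. ennreal (exp (-z)) * min (ennreal z) T * indicator {0<..} z \<partial>lborel)
      = ennreal (1 - (1+t)*exp(-t)) + ennreal (t * exp(-t))"
    using real by (simp add: ennreal_mult)
  have h1: "(1+t)*exp(-t) \<le> 1"
  proof -
    have "1 + t \<le> exp t" by (rule exp_ge_add_one_self)
    then have "(1+t)*exp(-t) \<le> exp t * exp (-t)" by (intro mult_right_mono) auto
    then show ?thesis by (simp add: exp_minus)
  qed
  have a: "0 \<le> 1 - (1+t)*exp(-t)" using h1 by simp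
  have b: "0 \<le> t*exp(-t)" using real by simp
  have "ennreal (1 - (1+t)*exp(-t)) + ennreal (t * exp(-t)) + ennreal (exp (-t))
     = ennreal (1 - (1+t)*exp(-t) + t * exp(-t)) + ennreal (exp (-t))"
    using ennreal_plus[OF a b] by simp
  also have "\<dots> = ennreal (1 - (1+t)*exp(-t) + t * exp(-t) + exp (-t))"
    using a b by (intro ennreal_plus[symmetric]) auto
  also have "1 - (1+t)*exp(-t) + t * exp(-t) + exp (-t) = 1" by (simp add: algebra_simps)
  finally show ?thesis using eq real by (simp add: exp_neg_def)
qed


lemma Gf_measurable[measurable]:
  fixes g :: "real \<Rightarrow> ennreal"
  assumes g[measurable]: "g \<in> borel_measurable borel"
  shows "(\<lambda>u. \<integral>\<^sup>+ r. g r * indicator {a<..u} r \<partial>lborel) \<in> borel_measurable borel"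
proof -
  have "(\<lambda>u. \<integral>\<^sup>+ r. g r * indicator {a<..u} r \<partial>lborel) = (\<lambda>u. \<integral>\<^sup>+ r. (if a < r \<and> r \<le> u then g r else 0) \<partial>lborel)"
    by (auto simp: indicator_def intro!: nn_integral_cong)
  also have "\<dots> \<in> borel_measurable borel" by measurable
  finally show ?thesis .
qed

lemma CL:
  fixes g :: "real \<Rightarrow> ennreal" and a :: real and D :: "real set"
  assumes g[measurable]: "g \<in> borel_measurable borel"
    and Dm[measurable]: "D \<in> sets borel" and D: "D \<subseteq> {a<..}" "\<forall>u\<in>D. {a<..u} \<subseteq> D"
  shows "(\<integral>\<^sup>+ u. g u * exp_neg (\<integral>\<^sup>+ r. g r * indicator {a<..u} r \<partial>lborel) * indicator D u \<partial>lborel)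
          + exp_neg (\<integral>\<^sup>+ u. g u * indicator D u \<partial>lborel) \<le> 1"
proof -
  define Gf where "Gf = (\<lambda>u. \<integral>\<^sup>+ r. g r * indicator {a<..u} r \<partial>lborel)"
  have Gm[measurable]: "Gf \<in> borel_measurable borel" unfolding Gf_def by (rule Gf_measurable[OF g])
  define T where "T = (\<integral>\<^sup>+ u. g u * indicator D u \<partial>lborel)"
  have "(\<integral>\<^sup>+ u. g u * exp_neg (Gf u) * indicator D u \<partial>lborel)
     = (\<integral>\<^sup>+ u. \<integral>\<^sup>+ z. (g u * indicator D u) * (ennreal (exp (-z)) * indicator {z. Gf u < ennreal z} z) \<partial>lborel \<partial>lborel)"
    by (intro nn_integral_cong) (simp add: exp_neg_layer[of "Gf _"] nn_integral_cmult mult_ac)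
  also have "\<dots> = (\<integral>\<^sup>+ z. \<integral>\<^sup>+ u. (g u * indicator D u) * (ennreal (exp (-z)) * indicator {z. Gf u < ennreal z} z) \<partial>lborel \<partial>lborel)"
    by (rule lborel_pair.Fubini'[symmetric]) measurable
  also have "\<dots> = (\<integral>\<^sup>+ z. ennreal (exp (-z)) * (\<integral>\<^sup>+ u. g u * indicator D u * indicator {u. Gf u < ennreal z} u \<partial>lborel) \<partial>lborel)"
    by (intro nn_integral_cong) (simp add: nn_integral_cmult[symmetric] mult_ac indicator_def)
  also have "\<dots> \<le> (\<integral>\<^sup>+ z. ennreal (exp (-z)) * min (ennreal z) T * indicator {0<..} z \<partial>lborel)"
  proof (intro nn_integral_mono)
    fix z :: real
    have b1: "(\<integral>\<^sup>+ u. g u * indicator D u * indicator {u. Gf u < ennreal z} u \<partial>lborel) \<le> ennreal z"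
      unfolding Gf_def by (rule level_bound[OF g D])
    have b2: "(\<integral>\<^sup>+ u. g u * indicator D u * indicator {u. Gf u < ennreal z} u \<partial>lborel) \<le> T"
      unfolding T_def by (intro nn_integral_mono) (auto simp: indicator_def)
    show "ennreal (exp (-z)) * (\<integral>\<^sup>+ u. g u * indicator D u * indicator {u. Gf u < ennreal z} u \<partial>lborel)
          \<le> ennreal (exp (-z)) * min (ennreal z) T * indicator {0<..} z"
    proof (cases "0 < z")
      case True
      then show ?thesis using b1 b2 by (simp add: mult_left_mono)
    next
      case False
      then have "ennreal z = 0" by (simp add: ennreal_eq_0_iff)
      then have "(\<integral>\<^sup>+ u. g u * indicator D u * indicator {u. Gf u < ennreal z} u \<partial>lborel) = 0" by simp
      then show ?thesis by simp
    qed
  qed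
  finally have "(\<integral>\<^sup>+ u. g u * exp_neg (Gf u) * indicator D u \<partial>lborel) + exp_neg T
      \<le> (\<integral>\<^sup>+ z. ennreal (exp (-z)) * min (ennreal z) T * indicator {0<..} z \<partial>lborel) + exp_neg T"
    by (rule add_right_mono)
  also have "\<dots> = 1" by (rule L4)
  finally show ?thesis unfolding Gf_def T_def .
qed


lemma ck_space: "collision_kernel B \<Longrightarrow> space (B x) = UNIV"
  unfolding collision_kernel_def using sets_eq_imp_space_eq[of "B x" borel] by auto

lemma ck_mass:
  fixes B :: "'a::euclidean_space \<Rightarrow> 'a measure"
  assumes ck: "collision_kernel B" and lbp: "LBP B"
  shows "emeasure (B x) (space (B x)) = ennreal (norm x)"
proof -
  have hom: "\<And>c u. c \<ge> 0 \<Longrightarrow> u \<in> sphere (0::'a) 1 \<Longrightarrow> B (c *\<^sub>R u) = scale_measure (ennreal c) (B u)"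
    using lbp unfolding LBP_def by auto
  have one: "\<And>u. u \<in> sphere (0::'a) 1 \<Longrightarrow> emeasure (B u) (space (B u)) = 1"
    using ck unfolding collision_kernel_def by auto
  show ?thesis
  proof (cases "x = 0")
    case True
    obtain b :: 'a where b: "b \<in> Basis" using nonempty_Basis by blast
    then have bs: "b \<in> sphere 0 1" by simp
    have "B x = B (0 *\<^sub>R b)" using True by simp
    also have "\<dots> = scale_measure (ennreal 0) (B b)" using hom[OF _ bs, of 0] by simp
    finally show ?thesis using True by (simp add: space_scale_measure)
  next
    case False
    define u where "u = x /\<^sub>R norm x"
    have us: "u \<in> sphere 0 1" using False by (simp add: u_def)
    have "x = norm x *\<^sub>R u" using False by (simp add: u_def)
    then have "B x = scale_measure (ennreal (norm x)) (B u)" using hom[OF _ us, of "norm x"] by simp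
    then show ?thesis using one[OF us] by (simp add: space_scale_measure)
  qed
qed

lemma ck_AE_sphere:
  fixes B :: "'a::euclidean_space \<Rightarrow> 'a measure"
  assumes ck: "collision_kernel B"
  shows "AE \<sigma> in B x. norm \<sigma> = 1"
proof -
  have s: "sets (B x) = sets borel" and z: "emeasure (B x) (- sphere 0 1) = 0"
    using ck unfolding collision_kernel_def by auto
  show ?thesis
    by (subst AE_iff_measurable[of "- sphere 0 1"]) (auto simp: s z ck_space[OF ck])
qed

lemma kac_rate_eq:
  fixes B :: "'a::euclidean_space \<Rightarrow> 'a measure"
  assumes ck: "collision_kernel B" and lbp: "LBP B"
  shows "kac_rate B \<rho> r v = (\<integral>\<^sup>+ w. ennreal (2 * norm (v - w)) \<partial>\<rho> r)"
  unfolding kac_rate_def by (simp add: ck_mass[OF ck lbp] ennreal_mult)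

lemma env_sets: "environment \<rho> \<Longrightarrow> sets (\<rho> r) = sets borel"
  unfolding environment_def by auto

lemma env_space: "environment \<rho> \<Longrightarrow> space (\<rho> r) = UNIV"
  using sets_eq_imp_space_eq[of "\<rho> r" borel] by (simp add: env_sets)

lemma env_mass: "environment \<rho> \<Longrightarrow> r \<ge> 0 \<Longrightarrow> emeasure (\<rho> r) (space (\<rho> r)) \<le> 1"
  unfolding environment_def by auto

lemma env_energy: "environment \<rho> \<Longrightarrow> r \<ge> 0 \<Longrightarrow> (\<integral>\<^sup>+ v. ennreal (norm v ^ 2) \<partial>\<rho> r) \<le> 1"
  unfolding environment_def by auto

lemma env_subprob:
  fixes \<rho> :: "real \<Rightarrow> 'a::euclidean_space measure"
  assumes env: "environment \<rho>"
  shows "\<rho> \<in> measurable (restrict_space borel {0..}) (subprob_algebra borel)"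
proof (rule measurable_subprob_algebra)
  fix a assume "a \<in> space (restrict_space (borel :: real measure) {0..})"
  then have a: "a \<ge> 0" by (simp add: space_restrict_space)
  show "subprob_space (\<rho> a)"
    by (rule subprob_spaceI) (use env_mass[OF env a] env_space[OF env] in auto)
  show "sets (\<rho> a) = sets borel" by (rule env_sets[OF env])
next
  fix A :: "'a set" assume "A \<in> sets borel"
  then show "(\<lambda>a. emeasure (\<rho> a) A) \<in> borel_measurable (restrict_space borel {0..})"
    using env unfolding environment_def by auto
qed

lemma env_integral_measurable:
  fixes \<rho> :: "real \<Rightarrow> 'a::euclidean_space measure" and f :: "'a \<Rightarrow> ennreal"
  assumes env: "environment \<rho>" and f: "f \<in> borel_measurable borel"
  shows "(\<lambda>r. indicator {0..} r * (\<integral>\<^sup>+ w. f w \<partial>\<rho> r)) \<in> borel_measurable borel"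
proof -
  have "(\<lambda>r. \<integral>\<^sup>+ w. f w \<partial>\<rho> r) \<in> borel_measurable (restrict_space borel {0..})"
    using measurable_compose[OF env_subprob[OF env] nn_integral_measurable_subprob_algebra[OF f]] by simp
  then have "(\<lambda>r. (\<integral>\<^sup>+ w. f w \<partial>\<rho> r) * indicator {0..} r) \<in> borel_measurable borel"
    by (subst (asm) borel_measurable_restrict_space_iff_ennreal) auto
  then show ?thesis by (simp add: mult.commute)
qed

lemma env_first_moment:
  fixes \<rho> :: "real \<Rightarrow> 'a::euclidean_space measure"
  assumes env: "environment \<rho>" and r: "r \<ge> 0"
  shows "(\<integral>\<^sup>+ w. ennreal (norm w) \<partial>\<rho> r) \<le> 1"
proof -
  have "(\<integral>\<^sup>+ w. ennreal (norm w) \<partial>\<rho> r) \<le> (\<integral>\<^sup>+ w. ennreal (1/2) * (1 + ennreal (norm w ^ 2)) \<partial>\<rho> r)"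
  proof (intro nn_integral_mono)
    fix w :: 'a
    have "norm w \<le> (1/2) * (1 + norm w ^ 2)"
      using sum_squares_bound[of 1 "norm w"] by (simp add: power2_eq_square algebra_simps)
    then have "ennreal (norm w) \<le> ennreal ((1/2) * (1 + norm w ^ 2))" by (rule ennreal_leI)
    also have "ennreal ((1/2) * (1 + norm w ^ 2)) = ennreal (1/2) * (1 + ennreal (norm w ^ 2))"
      by (subst ennreal_mult) (auto simp: ennreal_plus)
    finally show "ennreal (norm w) \<le> ennreal (1/2) * (1 + ennreal (norm w ^ 2))" .
  qed
  also have "\<dots> = ennreal (1/2) * (\<integral>\<^sup>+ w. 1 + ennreal (norm w ^ 2) \<partial>\<rho> r)"
    by (rule nn_integral_cmult) (simp add: measurable_cong_sets[OF env_sets[OF env] refl])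
  also have "(\<integral>\<^sup>+ w. 1 + ennreal (norm w ^ 2) \<partial>\<rho> r) = emeasure (\<rho> r) (space (\<rho> r)) + (\<integral>\<^sup>+ w. ennreal (norm w ^ 2) \<partial>\<rho> r)"
    by (subst nn_integral_add) (auto simp: measurable_cong_sets[OF env_sets[OF env] refl])
  then have "ennreal (1/2) * (\<integral>\<^sup>+ w. 1 + ennreal (norm w ^ 2) \<partial>\<rho> r) = ennreal (1/2) * (emeasure (\<rho> r) (space (\<rho> r)) + (\<integral>\<^sup>+ w. ennreal (norm w ^ 2) \<partial>\<rho> r))"
    by simp
  also have "\<dots> \<le> ennreal (1/2) * (1 + 1)"
    by (intro mult_left_mono add_mono env_mass[OF env r] env_energy[OF env r]) auto
  also have "\<dots> = ennreal (1/2 * 2)" by (subst ennreal_mult) (auto simp: one_add_one)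
  also have "\<dots> = 1" by simp
  finally show ?thesis .
qed

lemma rate_bound:
  fixes \<rho> :: "real \<Rightarrow> 'a::euclidean_space measure"
  assumes ck: "collision_kernel B" and lbp: "LBP B" and env: "environment \<rho>" and r: "r \<ge> 0"
  shows "kac_rate B \<rho> r v \<le> ennreal (2 * norm v + 2)"
proof -
  have "kac_rate B \<rho> r v \<le> (\<integral>\<^sup>+ w. ennreal (2 * norm v) + ennreal 2 * ennreal (norm w) \<partial>\<rho> r)"
    unfolding kac_rate_eq[OF ck lbp]
  proof (intro nn_integral_mono)
    fix w :: 'a
    have "2 * norm (v - w) \<le> 2 * norm v + 2 * norm w" using norm_triangle_ineq4[of v w] by simp
    then have "ennreal (2 * norm (v - w)) \<le> ennreal (2 * norm v + 2 * norm w)" by (rule ennreal_leI)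
    also have "ennreal (2 * norm v + 2 * norm w) = ennreal (2 * norm v) + ennreal 2 * ennreal (norm w)"
      by (subst ennreal_plus) (auto simp: ennreal_mult)
    finally show "ennreal (2 * norm (v - w)) \<le> ennreal (2 * norm v) + ennreal 2 * ennreal (norm w)" .
  qed
  also have "\<dots> = (\<integral>\<^sup>+ w. ennreal (2 * norm v) \<partial>\<rho> r) + (\<integral>\<^sup>+ w. ennreal 2 * ennreal (norm w) \<partial>\<rho> r)"
    by (subst nn_integral_add) (auto simp: measurable_cong_sets[OF env_sets[OF env] refl])
  also have "\<dots> = ennreal (2 * norm v) * emeasure (\<rho> r) (space (\<rho> r)) + ennreal 2 * (\<integral>\<^sup>+ w. ennreal (norm w) \<partial>\<rho> r)"
    by (subst nn_integral_cmult) (auto simp: measurable_cong_sets[OF env_sets[OF env] refl])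
  also have "\<dots> \<le> ennreal (2 * norm v) * 1 + ennreal 2 * 1"
    by (intro add_mono mult_left_mono env_mass[OF env r] env_first_moment[OF env r]) auto
  also have "\<dots> = ennreal (2 * norm v + 2)" by (subst ennreal_plus) auto
  finally show ?thesis .
qed

lemma total_rate_bound:
  fixes \<rho> :: "real \<Rightarrow> 'a::euclidean_space measure"
  assumes ck: "collision_kernel B" and lbp: "LBP B" and env: "environment \<rho>" and r: "r \<ge> 0"
  shows "kac_total_rate B \<rho> r k f \<le> ennreal (\<Sum>i<k. 2 * norm (fst (f i)) + 2)"
  unfolding kac_total_rate_def
  apply (subst sum_ennreal[symmetric])
   apply simp
  apply (rule sum_mono)
  apply (rule rate_bound[OF ck lbp env r])
  done


lemma energy:
  fixes v w \<sigma> :: "'a::euclidean_space"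
  assumes "norm \<sigma> = 1"
  shows "norm (vpost v w \<sigma>) ^ 2 + norm (vpost_star v w \<sigma>) ^ 2 = norm v ^ 2 + norm w ^ 2"
proof -
  have s: "\<sigma> \<bullet> \<sigma> = 1" using assms by (simp add: power2_norm_eq_inner[symmetric])
  have n: "norm (v - w) ^ 2 = v \<bullet> v - 2 * (v \<bullet> w) + w \<bullet> w"
    by (simp add: power2_norm_eq_inner algebra_simps inner_commute)
  show ?thesis
    unfolding vpost_def vpost_star_def power2_norm_eq_inner
    using s n by (simp add: algebra_simps inner_commute power2_eq_square)
qed

lemma mono_powr_bound:
  fixes x :: real
  assumes "0 \<le> x" "0 \<le> \<alpha>" "\<alpha> \<le> \<gamma>"
  shows "x powr \<alpha> \<le> 1 + x powr \<gamma>"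
proof (cases "x \<le> 1")
  case True
  then have "x powr \<alpha> \<le> 1" using assms by (intro powr_le1) auto
  then show ?thesis by (smt (verit) powr_ge_zero)
next
  case False
  then have "x powr \<alpha> \<le> x powr \<gamma>" using assms by (intro powr_mono) auto
  then show ?thesis by simp
qed

lemma mono2_bound:
  fixes x y :: real
  assumes "0 \<le> x" "0 \<le> y" "0 \<le> \<alpha>" "\<alpha> \<le> \<gamma>" "0 \<le> \<beta>" "\<beta> \<le> \<delta>"
  shows "x powr \<alpha> * y powr \<beta> \<le> (1 + x powr \<gamma>) * (1 + y powr \<delta>)"
  using assms by (intro mult_mono mono_powr_bound) auto

lemma superadd_powr:
  fixes x y q :: real
  assumes "0 \<le> x" "0 \<le> y" "1 \<le> q"
  shows "x powr q + y powr q \<le> (x + y) powr q"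
proof -
  have k: "z powr q \<le> z * (x + y) powr (q - 1)" if "0 \<le> z" "z \<le> x + y" for z
  proof (cases "z = 0")
    case True then show ?thesis by simp
  next
    case False
    have "z powr q = z powr (1 + (q - 1))" by simp
    also have "\<dots> = z powr 1 * z powr (q - 1)" by (rule powr_add)
    also have "z powr 1 = z" using that by simp
    finally have "z powr q = z * z powr (q - 1)" .
    also have "\<dots> \<le> z * (x + y) powr (q - 1)"
      using that assms by (intro mult_left_mono powr_mono2) auto
    finally show ?thesis .
  qed
  have "x powr q + y powr q \<le> x * (x + y) powr (q - 1) + y * (x + y) powr (q - 1)"
    using k[of x] k[of y] assms by (intro add_mono) auto
  also have "\<dots> = (x + y) * (x + y) powr (q - 1)" by (simp add: algebra_simps)
  also have "\<dots> = (x + y) powr q"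
  proof (cases "x + y = 0")
    case True then show ?thesis by simp
  next
    case False
    have "(x + y) powr q = (x + y) powr (1 + (q - 1))" by simp
    also have "\<dots> = (x + y) powr 1 * (x + y) powr (q - 1)" by (rule powr_add)
    also have "(x + y) powr 1 = x + y" using assms by simp
    finally show ?thesis by simp
  qed
  finally show ?thesis .
qed

lemma mvt_powr:
  fixes A B q :: real
  assumes "0 < A" "0 \<le> B" "1 \<le> q"
  shows "(A + B) powr q - A powr q \<le> q * B * (A + B) powr (q - 1)"
proof (cases "B = 0")
  case True then show ?thesis by simp
next
  case False
  then have AB: "A < A + B" using assms by simp
  have "\<And>x. A \<le> x \<Longrightarrow> x \<le> A + B \<Longrightarrow> DERIV (\<lambda>z. z powr q) x :> q * x powr (q - 1)"
    using assms by (intro has_real_derivative_powr) auto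
  from MVT2[OF AB this] obtain z where z: "A < z" "z < A + B"
    "(A + B) powr q - A powr q = (A + B - A) * (q * z powr (q - 1))" by blast
  have "z powr (q - 1) \<le> (A + B) powr (q - 1)"
    using z assms by (intro powr_mono2) auto
  then have "(A + B - A) * (q * z powr (q - 1)) \<le> B * (q * (A + B) powr (q - 1))"
    using assms by (simp add: mult_left_mono)
  then show ?thesis using z by (simp add: algebra_simps)
qed

lemma diff_bound:
  fixes a b p :: real
  assumes a: "0 \<le> a" and b: "0 \<le> b" and p: "2 \<le> p"
  shows "(a\<^sup>2 + b\<^sup>2) powr (p/2) - a powr p
     \<le> 2 powr (p/2) * b powr p + (p/2) * 2 powr (p/2 - 1) * (b powr 2 * a powr (p - 2))"
proof (cases "a < b")
  case True
  have "(a\<^sup>2 + b\<^sup>2) powr (p/2) \<le> (2 * b\<^sup>2) powr (p/2)"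
    using True a b p by (intro powr_mono2) (auto simp: power_mono)
  also have "\<dots> = 2 powr (p/2) * b powr p"
    using b by (simp add: powr_mult powr_powr powr_numeral[symmetric] del: powr_numeral)
  finally have "(a\<^sup>2 + b\<^sup>2) powr (p/2) - a powr p \<le> 2 powr (p/2) * b powr p"
    using powr_ge_zero[of a p] by linarith
  moreover have "0 \<le> (p/2) * 2 powr (p/2 - 1) * (b powr 2 * a powr (p - 2))" using p by simp
  ultimately show ?thesis by linarith
next
  case False
  show ?thesis
  proof (cases "a = 0")
    case True
    then have "b = 0" using False b by simp
    then show ?thesis using True p by simp
  next
    case a0: False
    then have apos: "0 < a\<^sup>2" using a by simp
    have "(a\<^sup>2 + b\<^sup>2) powr (p/2) - (a\<^sup>2) powr (p/2) \<le> (p/2) * b\<^sup>2 * (a\<^sup>2 + b\<^sup>2) powr (p/2 - 1)"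
      using apos p by (intro mvt_powr) auto
    also have "(a\<^sup>2 + b\<^sup>2) powr (p/2 - 1) \<le> (2 * a\<^sup>2) powr (p/2 - 1)"
      using False a b p by (intro powr_mono2) (auto simp: power_mono)
    then have "(p/2) * b\<^sup>2 * (a\<^sup>2 + b\<^sup>2) powr (p/2 - 1) \<le> (p/2) * b\<^sup>2 * (2 * a\<^sup>2) powr (p/2 - 1)"
      using p by (intro mult_left_mono) auto
    also have "(2 * a\<^sup>2) powr (p/2 - 1) = 2 powr (p/2 - 1) * a powr (p - 2)"
      using a by (simp add: powr_mult powr_powr powr_numeral[symmetric] algebra_simps del: powr_numeral)
    finally have "(a\<^sup>2 + b\<^sup>2) powr (p/2) - (a\<^sup>2) powr (p/2) \<le> (p/2) * b\<^sup>2 * (2 powr (p/2 - 1) * a powr (p - 2))" .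
    moreover have "(a\<^sup>2) powr (p/2) = a powr p"
      using a by (simp add: powr_powr powr_numeral[symmetric] del: powr_numeral)
    moreover have "b\<^sup>2 = b powr 2" using b by simp
    ultimately have X: "(a\<^sup>2 + b\<^sup>2) powr (p/2) - a powr p \<le> (p/2) * b powr 2 * (2 powr (p/2 - 1) * a powr (p - 2))"
      by simp
    have e: "(p/2) * b powr 2 * (2 powr (p/2 - 1) * a powr (p - 2)) = (p/2) * 2 powr (p/2 - 1) * (b powr 2 * a powr (p - 2))"
      by (simp add: mult_ac)
    have "0 \<le> 2 powr (p/2) * b powr p" by simp
    then show ?thesis using X e by linarith
  qed
qed


definition Wt :: "real \<Rightarrow> 'a::euclidean_space \<Rightarrow> real" where
  "Wt p v = 1 + norm v powr p"

definition Mp :: "real \<Rightarrow> real \<Rightarrow> real \<Rightarrow> real" where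
  "Mp p a b = 2 + b powr p + 2 powr (p/2) * b powr p + (p/2) * 2 powr (p/2 - 1) * (b powr 2 * a powr (p - 2))"

definition cp :: "real \<Rightarrow> real" where
  "cp p = 8 + 4 * (1 + 2 powr (p/2)) + p * 2 powr (p/2)"

lemma Wt_nonneg: "0 \<le> Wt p v" unfolding Wt_def by (smt (verit) powr_ge_zero)

lemma Mp_nonneg: "0 \<le> p \<Longrightarrow> 0 \<le> Mp p a b"
  unfolding Mp_def by (intro add_nonneg_nonneg mult_nonneg_nonneg) auto

lemma inc_gen:
  fixes v w \<sigma> :: "'a::euclidean_space"
  assumes p: "2 \<le> p" and s: "norm \<sigma> = 1"
  shows "Wt p (vpost v w \<sigma>) + Wt p (vpost_star v w \<sigma>) + Wt p w - Wt p v \<le> Mp p (norm v) (norm w)"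
proof -
  let ?x = "norm (vpost v w \<sigma>)" and ?y = "norm (vpost_star v w \<sigma>)" and ?a = "norm v" and ?b = "norm w"
  have pw: "z powr p = (z\<^sup>2) powr (p/2)" if "0 \<le> z" for z :: real
    using that by (simp add: powr_powr powr_numeral[symmetric] del: powr_numeral)
  have "?x powr p + ?y powr p = (?x\<^sup>2) powr (p/2) + (?y\<^sup>2) powr (p/2)" by (simp add: pw)
  also have "\<dots> \<le> (?x\<^sup>2 + ?y\<^sup>2) powr (p/2)" using p by (intro superadd_powr) auto
  also have "?x\<^sup>2 + ?y\<^sup>2 = ?a\<^sup>2 + ?b\<^sup>2" by (rule energy[OF s])
  finally have 1: "?x powr p + ?y powr p \<le> (?a\<^sup>2 + ?b\<^sup>2) powr (p/2)" .
  have 2: "(?a\<^sup>2 + ?b\<^sup>2) powr (p/2) - ?a powr p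
     \<le> 2 powr (p/2) * ?b powr p + (p/2) * 2 powr (p/2 - 1) * (?b powr 2 * ?a powr (p - 2))"
    using p by (intro diff_bound) auto
  show ?thesis using 1 2 unfolding Wt_def Mp_def by linarith
qed

lemma rate_gen:
  fixes v w :: "'a::euclidean_space"
  assumes p: "2 \<le> p"
  shows "2 * norm (v - w) * Mp p (norm v) (norm w) \<le> cp p * Wt p v * (1 + norm w powr (p + 1))"
proof -
  define a where "a = norm v"
  define b where "b = norm w"
  have a: "0 \<le> a" and b: "0 \<le> b" by (auto simp: a_def b_def)
  define P where "P = (1 + a powr p) * (1 + b powr (p + 1))"
  define q where "q = 2 powr (p/2)"
  define K where "K = (p/2) * 2 powr (p/2 - 1)"
  have q0: "0 \<le> q" and K0: "0 \<le> K" using p by (auto simp: q_def K_def)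
  have K4: "4 * K = p * q"
  proof -
    have "2 powr (p/2 - 1 + 1) = 2 powr (p/2 - 1) * 2 powr 1" by (rule powr_add)
    then have "2 powr (p/2) = 2 powr (p/2 - 1) * 2" by simp
    then show ?thesis by (simp add: K_def q_def)
  qed
  have P1: "1 + a powr p \<le> P" "1 + b powr (p + 1) \<le> P"
    unfolding P_def by (auto intro!: mult_le_cancel_left1[THEN iffD2] mult_le_cancel_right1[THEN iffD2]
      simp: add_nonneg_nonneg) (smt (verit) powr_ge_zero)+
  have T1: "a \<le> P" using mono_powr_bound[OF a, of 1 p] p P1 a by simp
  have T2: "b \<le> P" using mono_powr_bound[OF b, of 1 "p+1"] p P1 b by simp
  have T3: "a * b powr p \<le> P" using mono2_bound[OF a b, of 1 p p "p+1"] p a unfolding P_def by simp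
  have T4: "b * b powr p \<le> P"
  proof -
    have "b * b powr p = b powr (p + 1)"
      using b by (cases "b = 0") (auto simp: powr_add)
    then show ?thesis using P1 by simp
  qed
  have T5: "a * (b powr 2 * a powr (p - 2)) \<le> P"
  proof -
    have "a * (b powr 2 * a powr (p - 2)) = a powr (p - 1) * b powr 2"
    proof (cases "a = 0")
      case True then show ?thesis by simp
    next
      case False
      have "a powr (p - 1) = a powr (1 + (p - 2))" by simp
      also have "\<dots> = a powr 1 * a powr (p - 2)" by (rule powr_add)
      also have "\<dots> = a * a powr (p - 2)" using a by simp
      finally show ?thesis by simp
    qed
    also have "\<dots> \<le> P" using mono2_bound[OF a b, of "p - 1" p 2 "p+1"] p unfolding P_def by simp
    finally show ?thesis .
  qed
  have T6: "b * (b powr 2 * a powr (p - 2)) \<le> P"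
  proof -
    have "b * (b powr 2 * a powr (p - 2)) = a powr (p - 2) * b powr 3"
    proof (cases "b = 0")
      case True then show ?thesis by simp
    next
      case False
      then show ?thesis using b by (simp add: power3_eq_cube power2_eq_square)
    qed
    also have "\<dots> \<le> P" using mono2_bound[OF a b, of "p - 2" p 3 "p+1"] p unfolding P_def by simp
    finally show ?thesis .
  qed
  have M0: "0 \<le> Mp p a b" using p by (intro Mp_nonneg) auto
  have eq: "2 * (a + b) * Mp p a b = 4 * a + 4 * b + 2 * (1 + q) * (a * b powr p + b * b powr p)
       + 2 * K * (a * (b powr 2 * a powr (p - 2)) + b * (b powr 2 * a powr (p - 2)))"
    unfolding Mp_def q_def K_def by (simp add: algebra_simps)
  have "2 * norm (v - w) * Mp p a b \<le> 2 * (a + b) * Mp p a b"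
    using norm_triangle_ineq4[of v w] M0 unfolding a_def b_def by (intro mult_right_mono) auto
  also have "\<dots> \<le> 4 * P + 4 * P + 2 * (1 + q) * (P + P) + 2 * K * (P + P)"
    unfolding eq using T1 T2 T3 T4 T5 T6 q0 K0
    by (intro add_mono mult_left_mono) auto
  also have "\<dots> = cp p * P" unfolding cp_def using K4 by (simp add: q_def algebra_simps)
  finally show ?thesis unfolding P_def Wt_def a_def b_def by (simp add: mult.assoc)
qed

lemma inc_2:
  fixes v w \<sigma> :: "'a::euclidean_space"
  assumes s: "norm \<sigma> = 1"
  shows "Wt 2 (vpost v w \<sigma>) + Wt 2 (vpost_star v w \<sigma>) + Wt 2 w - Wt 2 v \<le> 2 + 2 * norm w ^ 2"
  using energy[OF s, of v w] unfolding Wt_def by simp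

lemma rate_2:
  fixes v w :: "'a::euclidean_space"
  shows "2 * norm (v - w) * (2 + 2 * norm w ^ 2) \<le> 8 * Wt 2 v * (1 + norm w powr (2 + 1))"
proof -
  define a where "a = norm v"
  define b where "b = norm w"
  have a: "0 \<le> a" and b: "0 \<le> b" by (auto simp: a_def b_def)
  have p3: "norm w powr (2 + 1) = b ^ 3" using b unfolding b_def by simp
  have k1: "a \<le> (1/2) * (1 + a\<^sup>2)" using sum_squares_bound[of a 1] by (simp add: algebra_simps power2_eq_square)
  have k2: "(1/2) * (1 + b\<^sup>2) + b + b ^ 3 \<le> 2 + 2 * b ^ 3"
  proof -
    have "0 \<le> b * (b - 1)\<^sup>2 + (3/2) * (b - 2/3)\<^sup>2 + 5/6" using b by simp
    moreover have "b * (b - 1)\<^sup>2 + (3/2) * (b - 2/3)\<^sup>2 + 5/6 = (2 + 2 * b ^ 3) - ((1/2) * (1 + b\<^sup>2) + b + b ^ 3)"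
      by (simp add: power2_eq_square power3_eq_cube field_simps)
    ultimately show ?thesis by linarith
  qed
  have A: "a * (1 + b\<^sup>2) \<le> ((1/2) * (1 + a\<^sup>2)) * (1 + b\<^sup>2)"
    using k1 by (intro mult_right_mono) auto
  have B: "b * (1 + b\<^sup>2) \<le> (1 + a\<^sup>2) * (b + b ^ 3)"
  proof -
    have "b * (1 + b\<^sup>2) = 1 * (b + b ^ 3)" by (simp add: algebra_simps power2_eq_square power3_eq_cube)
    also have "\<dots> \<le> (1 + a\<^sup>2) * (b + b ^ 3)" using b by (intro mult_right_mono) auto
    finally show ?thesis .
  qed
  have e1: "(a + b) * (1 + b\<^sup>2) = a * (1 + b\<^sup>2) + b * (1 + b\<^sup>2)" by (simp add: algebra_simps)
  have e2: "((1/2) * (1 + a\<^sup>2)) * (1 + b\<^sup>2) + (1 + a\<^sup>2) * (b + b ^ 3) = (1 + a\<^sup>2) * ((1/2) * (1 + b\<^sup>2) + b + b ^ 3)"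
    by (simp add: field_simps)
  have "(a + b) * (1 + b\<^sup>2) \<le> (1 + a\<^sup>2) * ((1/2) * (1 + b\<^sup>2) + b + b ^ 3)"
    using A B e1 e2 by linarith
  also have "\<dots> \<le> (1 + a\<^sup>2) * (2 + 2 * b ^ 3)" using k2 by (intro mult_left_mono) auto
  finally have C: "(a + b) * (1 + b\<^sup>2) \<le> (1 + a\<^sup>2) * (2 + 2 * b ^ 3)" .
  have tri: "norm (v - w) \<le> a + b" using norm_triangle_ineq4[of v w] unfolding a_def b_def .
  have "2 * norm (v - w) * (2 + 2 * norm w ^ 2) = 4 * (norm (v - w) * (1 + b\<^sup>2))"
    unfolding b_def by (simp add: algebra_simps)
  also have "\<dots> \<le> 4 * ((a + b) * (1 + b\<^sup>2))"
    using tri by (intro mult_left_mono mult_right_mono) auto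
  also have "\<dots> \<le> 4 * ((1 + a\<^sup>2) * (2 + 2 * b ^ 3))" using C by simp
  also have "\<dots> = 8 * Wt 2 v * (1 + norm w powr (2 + 1))"
    unfolding Wt_def p3 a_def by (simp add: algebra_simps)
  finally show ?thesis .
qed

lemma rate_nonexp:
  fixes v w :: "'a::euclidean_space"
  shows "2 * norm (v - w) \<le> 3 * Wt 2 v * (1 + norm w powr (2 + 1))"
proof -
  define a where "a = norm v"
  define b where "b = norm w"
  have a: "0 \<le> a" and b: "0 \<le> b" by (auto simp: a_def b_def)
  have p3: "norm w powr (2 + 1) = b ^ 3" using b by (simp add: b_def)
  have k1: "2 * a \<le> 1 + a\<^sup>2" using sum_squares_bound[of a 1] by (simp add: algebra_simps power2_eq_square)
  have k2: "b \<le> 1 + b ^ 3"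
  proof -
    have "0 \<le> (b - 1)\<^sup>2 * (b + 1) + b\<^sup>2" using b by simp
    moreover have "(b - 1)\<^sup>2 * (b + 1) + b\<^sup>2 = 1 + b ^ 3 - b"
      by (simp add: algebra_simps power2_eq_square power3_eq_cube)
    ultimately show ?thesis by linarith
  qed
  have pa: "1 + a\<^sup>2 \<le> (1 + a\<^sup>2) * (1 + b ^ 3)" using b by (simp add: algebra_simps)
  have pb: "1 + b ^ 3 \<le> (1 + a\<^sup>2) * (1 + b ^ 3)" using b by (simp add: algebra_simps)
  have "2 * norm (v - w) \<le> 2 * a + 2 * b" using norm_triangle_ineq4[of v w] unfolding a_def b_def by simp
  also have "\<dots> \<le> 3 * ((1 + a\<^sup>2) * (1 + b ^ 3))" using k1 k2 pa pb by linarith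
  also have "\<dots> = 3 * Wt 2 v * (1 + norm w powr (2 + 1))"
    unfolding Wt_def p3 a_def by (simp add: algebra_simps)
  finally show ?thesis .
qed


lemma space_kstate: "space kstate_space = UNIV"
  unfolding kstate_space_def by (auto simp: space_pair_measure space_PiM)

lemma lkp_prob: "lin_kac_process B \<rho> s v0 M X \<Longrightarrow> prob_space M"
  unfolding lin_kac_process_def by auto

lemma lkp_meas: "lin_kac_process B \<rho> s v0 M X \<Longrightarrow> X n \<in> measurable M kstate_space"
  unfolding lin_kac_process_def by auto

lemma lkp_init: "lin_kac_process B \<rho> s v0 M X \<Longrightarrow> \<omega> \<in> space M \<Longrightarrow> X 0 \<omega> = (ereal s, 1, \<lambda>_. (v0, True))"
  unfolding lin_kac_process_def by auto

lemma lkp_markov: "lin_kac_process B \<rho> s v0 M X \<Longrightarrow> g \<in> borel_measurable kstate_space \<Longrightarrow>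
    A \<in> kac_history M X n \<Longrightarrow>
    (\<integral>\<^sup>+ \<omega>. g (X (Suc n) \<omega>) * indicator A \<omega> \<partial>M) = (\<integral>\<^sup>+ \<omega>. kac_step B \<rho> g (X n \<omega>) * indicator A \<omega> \<partial>M)"
  unfolding lin_kac_process_def by auto

lemma hist_basic: "A' \<in> sets kstate_space \<Longrightarrow> X n -` A' \<inter> space M \<in> kac_history M X n"
  unfolding kac_history_def by (intro sigma_sets.Basic) auto

lemma hist_top: "space M \<in> kac_history M X n"
  unfolding kac_history_def by (rule sigma_sets_top)

lemma markov_eq:
  assumes P: "lin_kac_process B \<rho> s v0 M X" and g: "g \<in> borel_measurable kstate_space"
  shows "(\<integral>\<^sup>+ \<omega>. g (X (Suc n) \<omega>) \<partial>M) = (\<integral>\<^sup>+ \<omega>. kac_step B \<rho> g (X n \<omega>) \<partial>M)"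
proof -
  have "(\<integral>\<^sup>+ \<omega>. g (X (Suc n) \<omega>) \<partial>M) = (\<integral>\<^sup>+ \<omega>. g (X (Suc n) \<omega>) * indicator (space M) \<omega> \<partial>M)"
    by (intro nn_integral_cong) auto
  also have "\<dots> = (\<integral>\<^sup>+ \<omega>. kac_step B \<rho> g (X n \<omega>) * indicator (space M) \<omega> \<partial>M)"
    by (rule lkp_markov[OF P g hist_top])
  also have "\<dots> = (\<integral>\<^sup>+ \<omega>. kac_step B \<rho> g (X n \<omega>) \<partial>M)"
    by (intro nn_integral_cong) auto
  finally show ?thesis .
qed

lemma markov_prod:
  assumes P: "lin_kac_process B \<rho> s v0 M X"
    and \<phi>: "\<phi> \<in> borel_measurable kstate_space" and g[measurable]: "g \<in> borel_measurable kstate_space"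
  shows "(\<integral>\<^sup>+ \<omega>. \<phi> (X n \<omega>) * g (X (Suc n) \<omega>) \<partial>M) \<le> (\<integral>\<^sup>+ \<omega>. \<phi> (X n \<omega>) * kac_step B \<rho> g (X n \<omega>) \<partial>M)"
proof -
  note Xm[measurable] = lkp_meas[OF P]
  show ?thesis using \<phi>
proof (induction rule: borel_measurable_induct)
  case (cong f h)
  have "(\<integral>\<^sup>+ \<omega>. f (X n \<omega>) * g (X (Suc n) \<omega>) \<partial>M) = (\<integral>\<^sup>+ \<omega>. h (X n \<omega>) * g (X (Suc n) \<omega>) \<partial>M)"
    by (intro nn_integral_cong) (simp add: cong(3) space_kstate)
  moreover have "(\<integral>\<^sup>+ \<omega>. f (X n \<omega>) * kac_step B \<rho> g (X n \<omega>) \<partial>M) = (\<integral>\<^sup>+ \<omega>. h (X n \<omega>) * kac_step B \<rho> g (X n \<omega>) \<partial>M)"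
    by (intro nn_integral_cong) (simp add: cong(3) space_kstate)
  ultimately show ?case using cong(4) by simp
next
  case (set A)
  have eqi: "\<And>\<omega>. \<omega> \<in> space M \<Longrightarrow> indicator A (X n \<omega>) = (indicator (X n -` A \<inter> space M) \<omega> :: ennreal)"
    by (auto simp: indicator_def)
  have "(\<integral>\<^sup>+ \<omega>. indicator A (X n \<omega>) * g (X (Suc n) \<omega>) \<partial>M) = (\<integral>\<^sup>+ \<omega>. g (X (Suc n) \<omega>) * indicator (X n -` A \<inter> space M) \<omega> \<partial>M)"
    by (intro nn_integral_cong) (simp add: eqi mult.commute)
  also have "\<dots> = (\<integral>\<^sup>+ \<omega>. kac_step B \<rho> g (X n \<omega>) * indicator (X n -` A \<inter> space M) \<omega> \<partial>M)"
    by (rule lkp_markov[OF P g hist_basic[OF set]])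
  also have "\<dots> = (\<integral>\<^sup>+ \<omega>. indicator A (X n \<omega>) * kac_step B \<rho> g (X n \<omega>) \<partial>M)"
    by (intro nn_integral_cong) (simp add: eqi mult.commute)
  finally show ?case by simp
next
  case (mult u c)
  have [measurable]: "u \<in> borel_measurable kstate_space" using mult by blast
  have IH: "(\<integral>\<^sup>+ \<omega>. u (X n \<omega>) * g (X (Suc n) \<omega>) \<partial>M) \<le> (\<integral>\<^sup>+ \<omega>. u (X n \<omega>) * kac_step B \<rho> g (X n \<omega>) \<partial>M)"
    using mult by blast
  have "(\<integral>\<^sup>+ \<omega>. c * u (X n \<omega>) * g (X (Suc n) \<omega>) \<partial>M) = c * (\<integral>\<^sup>+ \<omega>. u (X n \<omega>) * g (X (Suc n) \<omega>) \<partial>M)"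
    by (subst nn_integral_cmult[symmetric]) (auto simp: mult.assoc)
  also have "\<dots> \<le> c * (\<integral>\<^sup>+ \<omega>. u (X n \<omega>) * kac_step B \<rho> g (X n \<omega>) \<partial>M)"
    using IH by (rule mult_left_mono) simp
  also have "\<dots> \<le> (\<integral>\<^sup>+ \<omega>. c * (u (X n \<omega>) * kac_step B \<rho> g (X n \<omega>)) \<partial>M)"
    by (rule nn_integral_cmult_le)
  finally show ?case by (simp add: mult.assoc)
next
  case (add u v)
  have [measurable]: "u \<in> borel_measurable kstate_space" "v \<in> borel_measurable kstate_space" using add by blast+
  have IHu: "(\<integral>\<^sup>+ \<omega>. u (X n \<omega>) * g (X (Suc n) \<omega>) \<partial>M) \<le> (\<integral>\<^sup>+ \<omega>. u (X n \<omega>) * kac_step B \<rho> g (X n \<omega>) \<partial>M)"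
    using add by blast
  have IHv: "(\<integral>\<^sup>+ \<omega>. v (X n \<omega>) * g (X (Suc n) \<omega>) \<partial>M) \<le> (\<integral>\<^sup>+ \<omega>. v (X n \<omega>) * kac_step B \<rho> g (X n \<omega>) \<partial>M)"
    using add by blast
  have "(\<integral>\<^sup>+ \<omega>. (v (X n \<omega>) + u (X n \<omega>)) * g (X (Suc n) \<omega>) \<partial>M)
      = (\<integral>\<^sup>+ \<omega>. v (X n \<omega>) * g (X (Suc n) \<omega>) \<partial>M) + (\<integral>\<^sup>+ \<omega>. u (X n \<omega>) * g (X (Suc n) \<omega>) \<partial>M)"
    by (subst nn_integral_add[symmetric]) (auto simp: distrib_right)
  also have "\<dots> \<le> (\<integral>\<^sup>+ \<omega>. v (X n \<omega>) * kac_step B \<rho> g (X n \<omega>) \<partial>M) + (\<integral>\<^sup>+ \<omega>. u (X n \<omega>) * kac_step B \<rho> g (X n \<omega>) \<partial>M)"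
    using IHv IHu by (rule add_mono)
  also have "\<dots> \<le> (\<integral>\<^sup>+ \<omega>. v (X n \<omega>) * kac_step B \<rho> g (X n \<omega>) + u (X n \<omega>) * kac_step B \<rho> g (X n \<omega>) \<partial>M)"
    by (rule nn_integral_superadd)
  finally show ?case by (simp add: distrib_right)
next
  case (seq U)
  have [measurable]: "\<And>i. U i \<in> borel_measurable kstate_space" using seq by blast
  have IH: "\<And>i. (\<integral>\<^sup>+ \<omega>. U i (X n \<omega>) * g (X (Suc n) \<omega>) \<partial>M) \<le> (\<integral>\<^sup>+ \<omega>. U i (X n \<omega>) * kac_step B \<rho> g (X n \<omega>) \<partial>M)"
    using seq by blast
  have incU: "incseq U" using seq by blast
  have "(\<integral>\<^sup>+ \<omega>. (SUP i. U i) (X n \<omega>) * g (X (Suc n) \<omega>) \<partial>M) = (\<integral>\<^sup>+ \<omega>. (SUP i. U i (X n \<omega>) * g (X (Suc n) \<omega>)) \<partial>M)"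
    by (intro nn_integral_cong) (simp add: SUP_mult_right_ennreal image_comp)
  also have "\<dots> = (SUP i. \<integral>\<^sup>+ \<omega>. U i (X n \<omega>) * g (X (Suc n) \<omega>) \<partial>M)"
  proof (rule nn_integral_monotone_convergence_SUP)
    show "incseq (\<lambda>i \<omega>. U i (X n \<omega>) * g (X (Suc n) \<omega>))"
    proof -
      have mono: "U i y \<le> U j y" if "i \<le> j" for i j y
        using le_funD[OF incU[unfolded incseq_def, rule_format, OF that]] .
      show ?thesis unfolding incseq_def le_fun_def by (auto intro!: mult_right_mono mono)
    qed
    show "\<And>i. (\<lambda>\<omega>. U i (X n \<omega>) * g (X (Suc n) \<omega>)) \<in> borel_measurable M" by measurable
  qed
  also have "\<dots> \<le> (\<integral>\<^sup>+ \<omega>. (SUP i. U i) (X n \<omega>) * kac_step B \<rho> g (X n \<omega>) \<partial>M)"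
  proof (rule SUP_least)
    fix i
    have "(\<integral>\<^sup>+ \<omega>. U i (X n \<omega>) * g (X (Suc n) \<omega>) \<partial>M) \<le> (\<integral>\<^sup>+ \<omega>. U i (X n \<omega>) * kac_step B \<rho> g (X n \<omega>) \<partial>M)"
      by (rule IH)
    also have "\<dots> \<le> (\<integral>\<^sup>+ \<omega>. (SUP i. U i) (X n \<omega>) * kac_step B \<rho> g (X n \<omega>) \<partial>M)"
      by (intro nn_integral_mono mult_right_mono) (auto intro: SUP_upper)
    finally show "(\<integral>\<^sup>+ \<omega>. U i (X n \<omega>) * g (X (Suc n) \<omega>) \<partial>M) \<le> \<dots>" .
  qed
  finally show ?case .
qed
qed

lemma kac_step_ge_s_zero:
  assumes "ereal s \<le> fst y"
  shows "kac_step B \<rho> (indicator {y. fst y < ereal s}) y = 0"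
proof -
  obtain \<tau> k f where y: "y = (\<tau>, k, f)" by (cases y) auto
  show ?thesis
  proof (cases \<tau>)
    case (real t)
    then have ts: "s \<le> t" using assms y by simp
    have "(\<integral>\<^sup>+ u \<in> {t<..}. exp_neg (\<integral>\<^sup>+ r \<in> {t..u}. kac_total_rate B \<rho> r k f \<partial>lborel) *
                (\<Sum>i<k. \<integral>\<^sup>+ w. \<integral>\<^sup>+ \<sigma>. 2 * indicator {y. fst y < ereal s} (ereal u, Suc (Suc k), branch f k i w \<sigma>)
                                      \<partial>B (fst (f i) - w) \<partial>\<rho> u) \<partial>lborel) = 0"
      using ts by (intro nn_integral_zero') (auto simp: indicator_def)
    then show ?thesis using y real by (simp add: kac_step_def indicator_def)
  next
    case PInf then show ?thesis using y by (simp add: kac_step_def indicator_def)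
  next
    case MInf then show ?thesis using y assms by simp
  qed
qed

lemma Am_sets: "{y :: 'a::euclidean_space kstate. ereal s \<le> fst y} \<in> sets kstate_space"
proof -
  have "fst -` {ereal s..} \<inter> space (kstate_space :: 'a kstate measure) \<in> sets (kstate_space :: 'a kstate measure)"
    unfolding kstate_space_def by (rule measurable_sets[OF measurable_fst]) simp
  moreover have "fst -` {ereal s..} \<inter> space (kstate_space :: 'a kstate measure) = {y :: 'a kstate. ereal s \<le> fst y}"
    by (auto simp: space_kstate)
  ultimately show ?thesis by simp
qed

lemma lkp_invariant:
  assumes P: "lin_kac_process B \<rho> s v0 M X"
  shows "AE \<omega> in M. \<forall>n. ereal s \<le> fst (X n \<omega>)"
proof -
  interpret prob_space M using lkp_prob[OF P] .
  have "AE \<omega> in M. ereal s \<le> fst (X n \<omega>)" for n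
  proof (induction n)
    case 0
    show ?case using lkp_init[OF P] by (intro AE_I2) simp
  next
    case (Suc n)
    let ?g = "indicator {y. fst y < ereal s} :: 'a kstate \<Rightarrow> ennreal"
    have gm: "?g \<in> borel_measurable kstate_space"
      unfolding kstate_space_def by measurable
    have Am: "{y. ereal s \<le> fst y} \<in> sets kstate_space" by (rule Am_sets)
    let ?A = "X n -` {y. ereal s \<le> fst y} \<inter> space M"
    have "(\<integral>\<^sup>+ \<omega>. ?g (X (Suc n) \<omega>) * indicator ?A \<omega> \<partial>M) = (\<integral>\<^sup>+ \<omega>. kac_step B \<rho> ?g (X n \<omega>) * indicator ?A \<omega> \<partial>M)"
      by (rule lkp_markov[OF P gm hist_basic[OF Am]])
    also have "\<dots> = (\<integral>\<^sup>+ \<omega>. 0 \<partial>M)"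
      by (intro nn_integral_cong) (auto simp: indicator_def kac_step_ge_s_zero)
    finally have z: "(\<integral>\<^sup>+ \<omega>. ?g (X (Suc n) \<omega>) * indicator ?A \<omega> \<partial>M) = 0" by simp
    have Asets: "?A \<in> sets M" using measurable_sets[OF lkp_meas[OF P] Am] .
    have mz: "(\<lambda>\<omega>. ?g (X (Suc n) \<omega>) * indicator ?A \<omega>) \<in> borel_measurable M"
      by (intro borel_measurable_times_ennreal measurable_compose[OF lkp_meas[OF P] gm] borel_measurable_indicator Asets)
    have "AE \<omega> in M. ?g (X (Suc n) \<omega>) * indicator ?A \<omega> = 0"
      using z by (subst (asm) nn_integral_0_iff_AE[OF mz]) simp
    with Suc AE_space show ?case
      by eventually_elim (auto simp: indicator_def not_less split: if_splits)
  qed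
  then show ?thesis by (simp add: AE_all_countable)
qed

lemma telescoping:
  assumes P: "lin_kac_process B \<rho> s v0 M X"
    and \<phi>[measurable]: "\<phi> \<in> borel_measurable kstate_space"
    and g[measurable]: "g \<in> borel_measurable kstate_space"
    and h[measurable]: "h \<in> borel_measurable kstate_space"
    and step: "\<And>y. ereal s \<le> fst y \<Longrightarrow> \<phi> y * kac_step B \<rho> g y + kac_step B \<rho> h y \<le> h y"
  shows "(\<integral>\<^sup>+ \<omega>. (\<Sum>n. \<phi> (X n \<omega>) * g (X (Suc n) \<omega>)) \<partial>M) \<le> h (ereal s, 1, \<lambda>_. (v0, True))"
proof -
  interpret prob_space M using lkp_prob[OF P] .
  let ?x0 = "(ereal s, 1, \<lambda>_. (v0, True)) :: 'a kstate"
  note [measurable] = lkp_meas[OF P]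
  have main: "(\<integral>\<^sup>+ \<omega>. (\<Sum>n<N. \<phi> (X n \<omega>) * g (X (Suc n) \<omega>)) \<partial>M) + (\<integral>\<^sup>+ \<omega>. h (X N \<omega>) \<partial>M) \<le> h ?x0" for N
  proof (induction N)
    case 0
    have "(\<integral>\<^sup>+ \<omega>. h (X 0 \<omega>) \<partial>M) = (\<integral>\<^sup>+ \<omega>. h ?x0 \<partial>M)"
      by (intro nn_integral_cong) (simp add: lkp_init[OF P])
    then show ?case by (simp add: emeasure_space_1)
  next
    case (Suc N)
    have a: "(\<integral>\<^sup>+ \<omega>. (\<Sum>n<Suc N. \<phi> (X n \<omega>) * g (X (Suc n) \<omega>)) \<partial>M)
        = (\<integral>\<^sup>+ \<omega>. (\<Sum>n<N. \<phi> (X n \<omega>) * g (X (Suc n) \<omega>)) \<partial>M) + (\<integral>\<^sup>+ \<omega>. \<phi> (X N \<omega>) * g (X (Suc N) \<omega>) \<partial>M)"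
      by (simp add: nn_integral_add)
    have b: "(\<integral>\<^sup>+ \<omega>. h (X (Suc N) \<omega>) \<partial>M) = (\<integral>\<^sup>+ \<omega>. kac_step B \<rho> h (X N \<omega>) \<partial>M)"
      by (rule markov_eq[OF P h])
    have c: "(\<integral>\<^sup>+ \<omega>. \<phi> (X N \<omega>) * g (X (Suc N) \<omega>) \<partial>M) + (\<integral>\<^sup>+ \<omega>. kac_step B \<rho> h (X N \<omega>) \<partial>M)
        \<le> (\<integral>\<^sup>+ \<omega>. h (X N \<omega>) \<partial>M)"
    proof -
      have "(\<integral>\<^sup>+ \<omega>. \<phi> (X N \<omega>) * g (X (Suc N) \<omega>) \<partial>M) + (\<integral>\<^sup>+ \<omega>. kac_step B \<rho> h (X N \<omega>) \<partial>M)
          \<le> (\<integral>\<^sup>+ \<omega>. \<phi> (X N \<omega>) * kac_step B \<rho> g (X N \<omega>) \<partial>M) + (\<integral>\<^sup>+ \<omega>. kac_step B \<rho> h (X N \<omega>) \<partial>M)"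
        by (intro add_mono markov_prod[OF P \<phi> g]) simp
      also have "\<dots> \<le> (\<integral>\<^sup>+ \<omega>. \<phi> (X N \<omega>) * kac_step B \<rho> g (X N \<omega>) + kac_step B \<rho> h (X N \<omega>) \<partial>M)"
        by (rule nn_integral_superadd)
      also have "\<dots> \<le> (\<integral>\<^sup>+ \<omega>. h (X N \<omega>) \<partial>M)"
        using lkp_invariant[OF P] by (intro nn_integral_mono_AE) (auto intro: step)
      finally show ?thesis .
    qed
    have "(\<integral>\<^sup>+ \<omega>. (\<Sum>n<Suc N. \<phi> (X n \<omega>) * g (X (Suc n) \<omega>)) \<partial>M) + (\<integral>\<^sup>+ \<omega>. h (X (Suc N) \<omega>) \<partial>M)
       = (\<integral>\<^sup>+ \<omega>. (\<Sum>n<N. \<phi> (X n \<omega>) * g (X (Suc n) \<omega>)) \<partial>M) +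
         ((\<integral>\<^sup>+ \<omega>. \<phi> (X N \<omega>) * g (X (Suc N) \<omega>) \<partial>M) + (\<integral>\<^sup>+ \<omega>. kac_step B \<rho> h (X N \<omega>) \<partial>M))"
      unfolding a b by (simp add: add.assoc)
    also have "\<dots> \<le> (\<integral>\<^sup>+ \<omega>. (\<Sum>n<N. \<phi> (X n \<omega>) * g (X (Suc n) \<omega>)) \<partial>M) + (\<integral>\<^sup>+ \<omega>. h (X N \<omega>) \<partial>M)"
      by (rule add_left_mono[OF c])
    also have "\<dots> \<le> h ?x0" by (rule Suc.IH)
    finally show ?case .
  qed
  have "(\<integral>\<^sup>+ \<omega>. (\<Sum>n. \<phi> (X n \<omega>) * g (X (Suc n) \<omega>)) \<partial>M) = (\<Sum>n. \<integral>\<^sup>+ \<omega>. \<phi> (X n \<omega>) * g (X (Suc n) \<omega>) \<partial>M)"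
    by (rule nn_integral_suminf) simp
  also have "\<dots> = (SUP N. \<Sum>n<N. \<integral>\<^sup>+ \<omega>. \<phi> (X n \<omega>) * g (X (Suc n) \<omega>) \<partial>M)"
    by (rule suminf_eq_SUP)
  also have "\<dots> \<le> h ?x0"
  proof (rule SUP_least)
    fix N
    have "(\<Sum>n<N. \<integral>\<^sup>+ \<omega>. \<phi> (X n \<omega>) * g (X (Suc n) \<omega>) \<partial>M) = (\<integral>\<^sup>+ \<omega>. (\<Sum>n<N. \<phi> (X n \<omega>) * g (X (Suc n) \<omega>)) \<partial>M)"
      by (rule nn_integral_sum[symmetric]) simp
    also have "\<dots> \<le> (\<integral>\<^sup>+ \<omega>. (\<Sum>n<N. \<phi> (X n \<omega>) * g (X (Suc n) \<omega>)) \<partial>M) + (\<integral>\<^sup>+ \<omega>. h (X N \<omega>) \<partial>M)" by simp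
    also have "\<dots> \<le> h ?x0" by (rule main)
    finally show "(\<Sum>n<N. \<integral>\<^sup>+ \<omega>. \<phi> (X n \<omega>) * g (X (Suc n) \<omega>) \<partial>M) \<le> h ?x0" .
  qed
  finally show ?thesis .
qed


lemma exp_neg_ennreal: "0 \<le> x \<Longrightarrow> exp_neg (ennreal x) = ennreal (exp (- x))"
  by (simp add: exp_neg_def)

lemma exp_neg_zero[simp]: "exp_neg 0 = 1"
  by (simp add: exp_neg_def)

lemma exp_neg_add: "exp_neg (a + b) = exp_neg a * exp_neg b"
proof (cases "a = top \<or> b = top")
  case True then show ?thesis by (auto simp: exp_neg_def)
next
  case False
  then obtain x y where x: "a = ennreal x" "0 \<le> x" and y: "b = ennreal y" "0 \<le> y"
    by (metis enn2real_nonneg ennreal_enn2real top.not_eq_extremum)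
  then show ?thesis by (simp add: exp_neg_ennreal ennreal_plus[symmetric] ennreal_mult[symmetric] exp_add[symmetric] del: ennreal_plus)
qed

lemma exp_neg_le1: "exp_neg x \<le> 1"
  by (auto simp: exp_neg_def)

lemma exp_neg_measurable[measurable]: "exp_neg \<in> borel_measurable borel"
  unfolding exp_neg_def by measurable

lemma Gf_measurable_cl[measurable]:
  fixes g :: "real \<Rightarrow> ennreal"
  assumes g[measurable]: "g \<in> borel_measurable borel"
  shows "(\<lambda>u. \<integral>\<^sup>+ r. g r * indicator {a..u} r \<partial>lborel) \<in> borel_measurable borel"
proof -
  have "(\<lambda>u. \<integral>\<^sup>+ r. g r * indicator {a..u} r \<partial>lborel) = (\<lambda>u. \<integral>\<^sup>+ r. (if a \<le> r \<and> r \<le> u then g r else 0) \<partial>lborel)"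
    by (auto simp: indicator_def intro!: nn_integral_cong)
  also have "\<dots> \<in> borel_measurable borel" by measurable
  finally show ?thesis .
qed

lemma int_cl_op:
  fixes a u :: real
  shows "(\<integral>\<^sup>+ r. g r * indicator {a..u} r \<partial>lborel) = (\<integral>\<^sup>+ r. g r * indicator {a<..u} r \<partial>lborel)"
  by (intro nn_integral_cong_AE) (use AE_lborel_singleton[of a] in \<open>eventually_elim, auto simp: indicator_def\<close>)

lemma int_split:
  fixes g :: "real \<Rightarrow> ennreal"
  assumes [measurable]: "g \<in> borel_measurable borel" and "a \<le> b" "b \<le> c"
  shows "(\<integral>\<^sup>+ r. g r * indicator {a..c} r \<partial>lborel)
    = (\<integral>\<^sup>+ r. g r * indicator {a..b} r \<partial>lborel) + (\<integral>\<^sup>+ r. g r * indicator {b<..c} r \<partial>lborel)"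
proof -
  have "(\<integral>\<^sup>+ r. g r * indicator {a..c} r \<partial>lborel) = (\<integral>\<^sup>+ r. g r * indicator {a..b} r + g r * indicator {b<..c} r \<partial>lborel)"
    using assms by (intro nn_integral_cong) (auto simp: indicator_def)
  also have "\<dots> = (\<integral>\<^sup>+ r. g r * indicator {a..b} r \<partial>lborel) + (\<integral>\<^sup>+ r. g r * indicator {b<..c} r \<partial>lborel)"
    by (rule nn_integral_add) auto
  finally show ?thesis .
qed

lemma int_split_inf:
  fixes g :: "real \<Rightarrow> ennreal"
  assumes [measurable]: "g \<in> borel_measurable borel" and "a \<le> b"
  shows "(\<integral>\<^sup>+ r. g r * indicator {a..} r \<partial>lborel)
    = (\<integral>\<^sup>+ r. g r * indicator {a..b} r \<partial>lborel) + (\<integral>\<^sup>+ r. g r * indicator {b<..} r \<partial>lborel)"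
proof -
  have "(\<integral>\<^sup>+ r. g r * indicator {a..} r \<partial>lborel) = (\<integral>\<^sup>+ r. g r * indicator {a..b} r + g r * indicator {b<..} r \<partial>lborel)"
    using assms by (intro nn_integral_cong) (auto simp: indicator_def)
  also have "\<dots> = (\<integral>\<^sup>+ r. g r * indicator {a..b} r \<partial>lborel) + (\<integral>\<^sup>+ r. g r * indicator {b<..} r \<partial>lborel)"
    by (rule nn_integral_add) auto
  finally show ?thesis .
qed

lemma int_restrict0:
  fixes a :: real and S :: "real set"
  assumes "0 \<le> a" "\<And>r. r \<in> S \<Longrightarrow> a \<le> r"
  shows "(\<integral>\<^sup>+ r. g r * indicator S r \<partial>lborel) = (\<integral>\<^sup>+ r. (indicator {0..} r * g r) * indicator S r \<partial>lborel)"
proof (intro nn_integral_cong)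
  fix r
  show "g r * indicator S r = (indicator {0..} r * g r) * indicator S r"
  proof (cases "r \<in> S")
    case True
    then have "0 \<le> r" using assms by force
    then show ?thesis using True by simp
  qed simp
qed

definition mom :: "real \<Rightarrow> (real \<Rightarrow> 'a::euclidean_space measure) \<Rightarrow> real \<Rightarrow> ennreal" where
  "mom p \<rho> r = (\<integral>\<^sup>+ w. ennreal (1 + norm w powr (p + 1)) \<partial>\<rho> r)"

definition II :: "real \<Rightarrow> (real \<Rightarrow> 'a::euclidean_space measure) \<Rightarrow> real \<Rightarrow> real \<Rightarrow> ennreal" where
  "II p \<rho> s u = (\<integral>\<^sup>+ r. mom p \<rho> r * indicator {s..u} r \<partial>lborel)"

definition Ir :: "real \<Rightarrow> (real \<Rightarrow> 'a::euclidean_space measure) \<Rightarrow> real \<Rightarrow> real \<Rightarrow> real" where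
  "Ir p \<rho> s u = enn2real (II p \<rho> s u)"

definition Ssum :: "real \<Rightarrow> nat \<Rightarrow> (nat \<Rightarrow> 'a::euclidean_space \<times> bool) \<Rightarrow> real" where
  "Ssum p k f = (\<Sum>i<k. Wt p (fst (f i)))"

lemma Ssum_nonneg: "0 \<le> Ssum p k f"
  unfolding Ssum_def by (intro sum_nonneg) (auto simp: Wt_nonneg)

lemma mom_measurable[measurable]:
  assumes "environment \<rho>"
  shows "(\<lambda>r. indicator {0..} r * mom p \<rho> r) \<in> borel_measurable borel"
  unfolding mom_def by (rule env_integral_measurable[OF assms]) measurable

lemma rate_measurable[measurable]:
  assumes ck: "collision_kernel B" and lbp: "LBP B" and env: "environment \<rho>"
  shows "(\<lambda>r. indicator {0..} r * kac_total_rate B \<rho> r k f) \<in> borel_measurable borel"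
proof -
  have "(\<lambda>r. indicator {0..} r * kac_total_rate B \<rho> r k f)
     = (\<lambda>r. \<Sum>i<k. indicator {0..} r * (\<integral>\<^sup>+ w. ennreal (2 * norm (fst (f i) - w)) \<partial>\<rho> r))"
    unfolding kac_total_rate_def kac_rate_eq[OF ck lbp] by (simp add: sum_distrib_left)
  also have "\<dots> \<in> borel_measurable borel"
    by (intro borel_measurable_sum env_integral_measurable[OF env]) measurable
  finally show ?thesis .
qed

lemma II_mono: "u \<le> u' \<Longrightarrow> II p \<rho> s u \<le> II p \<rho> s u'"
  unfolding II_def by (intro nn_integral_mono) (auto simp: indicator_def)

lemma II_empty: "II p \<rho> s s = 0"
proof -
  have "II p \<rho> s s = (\<integral>\<^sup>+ r. mom p \<rho> r * indicator {s<..s} r \<partial>lborel)"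
    unfolding II_def by (rule int_cl_op)
  then show ?thesis by simp
qed


lemma tail_bound:
  fixes B :: "'a::euclidean_space \<Rightarrow> 'a measure" and \<rho> :: "real \<Rightarrow> 'a measure"
  assumes ck: "collision_kernel B" and lbp: "LBP B" and env: "environment \<rho>"
    and \<tau>0: "0 \<le> \<tau>" and \<tau>t: "\<tau> \<le> t"
  shows "(\<integral>\<^sup>+ u. exp_neg (\<integral>\<^sup>+ r. kac_total_rate B \<rho> r k f * indicator {\<tau>..u} r \<partial>lborel) * kac_total_rate B \<rho> u k f * indicator {t<..} u \<partial>lborel)
         + exp_neg (\<integral>\<^sup>+ r. kac_total_rate B \<rho> r k f * indicator {\<tau>..} r \<partial>lborel)
       \<le> exp_neg (\<integral>\<^sup>+ r. kac_total_rate B \<rho> r k f * indicator {\<tau>..t} r \<partial>lborel)"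
proof -
  define Q where "Q r = kac_total_rate B \<rho> r k f" for r
  define gQ where "gQ r = indicator {0..} r * Q r" for r
  have gQm[measurable]: "gQ \<in> borel_measurable borel"
    unfolding gQ_def Q_def by (rule rate_measurable[OF ck lbp env])
  define F where "F u = (\<integral>\<^sup>+ r. Q r * indicator {\<tau>..u} r \<partial>lborel)" for u
  define H where "H u = (\<integral>\<^sup>+ r. gQ r * indicator {t<..u} r \<partial>lborel)" for u
  define T where "T = (\<integral>\<^sup>+ r. gQ r * indicator {t<..} r \<partial>lborel)"
  have Hm[measurable]: "H \<in> borel_measurable borel" unfolding H_def by (rule Gf_measurable[OF gQm])
  have Fsplit: "F u = F t + H u" if "t \<le> u" for u
  proof -
    have "F u = (\<integral>\<^sup>+ r. gQ r * indicator {\<tau>..u} r \<partial>lborel)"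
      unfolding F_def gQ_def using \<tau>0 by (intro int_restrict0) auto
    also have "\<dots> = (\<integral>\<^sup>+ r. gQ r * indicator {\<tau>..t} r \<partial>lborel) + H u"
      unfolding H_def using \<tau>t that by (intro int_split) auto
    also have "(\<integral>\<^sup>+ r. gQ r * indicator {\<tau>..t} r \<partial>lborel) = F t"
      unfolding F_def gQ_def using \<tau>0 by (intro int_restrict0[symmetric]) auto
    finally show ?thesis .
  qed
  have Tsplit: "(\<integral>\<^sup>+ r. Q r * indicator {\<tau>..} r \<partial>lborel) = F t + T"
  proof -
    have "(\<integral>\<^sup>+ r. Q r * indicator {\<tau>..} r \<partial>lborel) = (\<integral>\<^sup>+ r. gQ r * indicator {\<tau>..} r \<partial>lborel)"
      unfolding gQ_def using \<tau>0 by (intro int_restrict0) auto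
    also have "\<dots> = (\<integral>\<^sup>+ r. gQ r * indicator {\<tau>..t} r \<partial>lborel) + T"
      unfolding T_def using \<tau>t by (intro int_split_inf) auto
    also have "(\<integral>\<^sup>+ r. gQ r * indicator {\<tau>..t} r \<partial>lborel) = F t"
      unfolding F_def gQ_def using \<tau>0 by (intro int_restrict0[symmetric]) auto
    finally show ?thesis .
  qed
  have "(\<integral>\<^sup>+ u. exp_neg (F u) * Q u * indicator {t<..} u \<partial>lborel)
      = (\<integral>\<^sup>+ u. exp_neg (F t) * (gQ u * exp_neg (H u) * indicator {t<..} u) \<partial>lborel)"
  proof (intro nn_integral_cong)
    fix u
    show "exp_neg (F u) * Q u * indicator {t<..} u = exp_neg (F t) * (gQ u * exp_neg (H u) * indicator {t<..} u)"
    proof (cases "t < u")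
      case True
      then have "0 \<le> u" using \<tau>0 \<tau>t by simp
      then show ?thesis using True Fsplit[of u] by (simp add: gQ_def exp_neg_add mult_ac)
    qed simp
  qed
  also have "\<dots> = exp_neg (F t) * (\<integral>\<^sup>+ u. gQ u * exp_neg (H u) * indicator {t<..} u \<partial>lborel)"
    by (rule nn_integral_cmult) measurable
  finally have I1: "(\<integral>\<^sup>+ u. exp_neg (F u) * Q u * indicator {t<..} u \<partial>lborel)
      = exp_neg (F t) * (\<integral>\<^sup>+ u. gQ u * exp_neg (H u) * indicator {t<..} u \<partial>lborel)" .
  have CLi: "(\<integral>\<^sup>+ u. gQ u * exp_neg (H u) * indicator {t<..} u \<partial>lborel) + exp_neg T \<le> 1"
    unfolding H_def T_def by (rule CL[OF gQm]) auto
  have "(\<integral>\<^sup>+ u. exp_neg (F u) * Q u * indicator {t<..} u \<partial>lborel) + exp_neg (\<integral>\<^sup>+ r. Q r * indicator {\<tau>..} r \<partial>lborel)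
      = exp_neg (F t) * ((\<integral>\<^sup>+ u. gQ u * exp_neg (H u) * indicator {t<..} u \<partial>lborel) + exp_neg T)"
    unfolding I1 Tsplit by (simp add: exp_neg_add distrib_left)
  also have "\<dots> \<le> exp_neg (F t) * 1" using CLi by (rule mult_left_mono) simp
  finally show ?thesis unfolding F_def Q_def by simp
qed


lemma body_bound:
  fixes B :: "'a::euclidean_space \<Rightarrow> 'a measure" and \<rho> :: "real \<Rightarrow> 'a measure"
  assumes ck: "collision_kernel B" and lbp: "LBP B" and env: "environment \<rho>"
    and s0: "0 \<le> s" and s\<tau>: "s \<le> \<tau>" and \<tau>t: "\<tau> \<le> t" and fin: "II p \<rho> s t < \<infinity>"
    and c0: "0 \<le> c" and S0: "0 \<le> S"
  shows "(\<integral>\<^sup>+ u. exp_neg (\<integral>\<^sup>+ r. kac_total_rate B \<rho> r k f * indicator {\<tau>..u} r \<partial>lborel) *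
            (ennreal S * (kac_total_rate B \<rho> u k f + ennreal c * mom p \<rho> u) * ennreal (exp (c * (Ir p \<rho> s t - Ir p \<rho> s u))))
            * indicator {\<tau><..t} u \<partial>lborel)
         + ennreal S * exp_neg (\<integral>\<^sup>+ r. kac_total_rate B \<rho> r k f * indicator {\<tau>..t} r \<partial>lborel)
       \<le> ennreal (S * exp (c * (Ir p \<rho> s t - Ir p \<rho> s \<tau>)))"
proof -
  have \<tau>0: "0 \<le> \<tau>" using s0 s\<tau> by simp
  define Q where "Q r = kac_total_rate B \<rho> r k f" for r
  define gQ where "gQ r = indicator {0..} r * Q r" for r
  define m' where "m' r = indicator {0..} r * mom p \<rho> r" for r
  have gQm[measurable]: "gQ \<in> borel_measurable borel"
    unfolding gQ_def Q_def by (rule rate_measurable[OF ck lbp env])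
  have m'm[measurable]: "m' \<in> borel_measurable borel"
    unfolding m'_def by (rule mom_measurable[OF env])
  define g where "g r = gQ r + ennreal c * m' r" for r
  have gm[measurable]: "g \<in> borel_measurable borel" unfolding g_def by measurable
  define F where "F u = (\<integral>\<^sup>+ r. Q r * indicator {\<tau>..u} r \<partial>lborel)" for u
  define G where "G u = (\<integral>\<^sup>+ r. g r * indicator {\<tau><..u} r \<partial>lborel)" for u
  have Gm[measurable]: "G \<in> borel_measurable borel" unfolding G_def by (rule Gf_measurable[OF gm])
  define E where "E u = exp (c * (Ir p \<rho> s t - Ir p \<rho> s u))" for u
  define X where "X u = (\<integral>\<^sup>+ r. m' r * indicator {\<tau><..u} r \<partial>lborel)" for u
  have key: "exp_neg (F u) * ennreal (E u) = ennreal (E \<tau>) * exp_neg (G u)" if u: "\<tau> \<le> u" "u \<le> t" for u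
  proof -
    have GF: "G u = F u + ennreal c * X u"
    proof -
      have "G u = (\<integral>\<^sup>+ r. gQ r * indicator {\<tau><..u} r + ennreal c * (m' r * indicator {\<tau><..u} r) \<partial>lborel)"
        unfolding G_def g_def by (intro nn_integral_cong) (simp add: distrib_right distrib_left mult_ac)
      also have "\<dots> = (\<integral>\<^sup>+ r. gQ r * indicator {\<tau><..u} r \<partial>lborel) + ennreal c * X u"
        unfolding X_def by (subst nn_integral_add) (auto simp: nn_integral_cmult)
      also have "(\<integral>\<^sup>+ r. gQ r * indicator {\<tau><..u} r \<partial>lborel) = F u"
      proof -
        have "(\<integral>\<^sup>+ r. gQ r * indicator {\<tau><..u} r \<partial>lborel) = (\<integral>\<^sup>+ r. Q r * indicator {\<tau><..u} r \<partial>lborel)"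
          unfolding gQ_def using \<tau>0 by (intro int_restrict0[symmetric]) auto
        also have "\<dots> = F u" unfolding F_def by (rule int_cl_op[symmetric])
        finally show ?thesis .
      qed
      finally show ?thesis .
    qed
    have IIsplit: "II p \<rho> s v = II p \<rho> s \<tau> + X v" if "\<tau> \<le> v" for v
    proof -
      have "II p \<rho> s v = (\<integral>\<^sup>+ r. m' r * indicator {s..v} r \<partial>lborel)"
        unfolding II_def m'_def using s0 by (intro int_restrict0) auto
      also have "\<dots> = (\<integral>\<^sup>+ r. m' r * indicator {s..\<tau>} r \<partial>lborel) + X v"
        unfolding X_def using s\<tau> that by (intro int_split) auto
      also have "(\<integral>\<^sup>+ r. m' r * indicator {s..\<tau>} r \<partial>lborel) = II p \<rho> s \<tau>"
        unfolding II_def m'_def using s0 by (intro int_restrict0[symmetric]) auto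
      finally show ?thesis .
    qed
    have IIu: "II p \<rho> s u < \<infinity>" using II_mono[OF u(2), of p \<rho> s] fin by (simp add: top.extremum_strict less_le_trans)
    have Xu: "X u < \<infinity>" and IIt: "II p \<rho> s \<tau> < \<infinity>" using IIu IIsplit[OF u(1)] by (auto simp: top_unique)
    have IrX: "Ir p \<rho> s u = Ir p \<rho> s \<tau> + enn2real (X u)"
      unfolding Ir_def using IIsplit[OF u(1)] Xu IIt by (simp add: enn2real_plus)
    define d where "d = enn2real (X u)"
    have d0: "0 \<le> d" by (simp add: d_def)
    have Xd: "X u = ennreal d" using Xu by (simp add: d_def)
    have "ennreal (E \<tau>) * exp_neg (G u) = ennreal (E \<tau>) * (exp_neg (F u) * ennreal (exp (- (c * d))))"
      unfolding GF Xd exp_neg_add using c0 d0 by (simp add: ennreal_mult[symmetric] exp_neg_ennreal)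
    also have "\<dots> = exp_neg (F u) * ennreal (E \<tau> * exp (- (c * d)))"
      by (simp add: ennreal_mult E_def mult_ac)
    also have "E \<tau> * exp (- (c * d)) = E u"
      unfolding E_def IrX d_def by (simp add: exp_add[symmetric] algebra_simps)
    finally show ?thesis ..
  qed
  define D where "D = {\<tau><..t}"
  have "(\<integral>\<^sup>+ u. exp_neg (F u) * (ennreal S * (Q u + ennreal c * mom p \<rho> u) * ennreal (E u)) * indicator D u \<partial>lborel)
      = (\<integral>\<^sup>+ u. (ennreal S * ennreal (E \<tau>)) * (g u * exp_neg (G u) * indicator D u) \<partial>lborel)"
  proof (intro nn_integral_cong)
    fix u
    show "exp_neg (F u) * (ennreal S * (Q u + ennreal c * mom p \<rho> u) * ennreal (E u)) * indicator D u
        = (ennreal S * ennreal (E \<tau>)) * (g u * exp_neg (G u) * indicator D u)"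
    proof (cases "u \<in> D")
      case True
      then have u: "\<tau> \<le> u" "u \<le> t" "0 \<le> u" using \<tau>0 by (auto simp: D_def)
      have "g u = Q u + ennreal c * mom p \<rho> u" using u by (simp add: g_def gQ_def m'_def)
      moreover have "exp_neg (F u) * ennreal (E u) = ennreal (E \<tau>) * exp_neg (G u)" by (rule key[OF u(1,2)])
      ultimately show ?thesis using True
        by (simp add: mult_ac) (metis (no_types, lifting) mult.assoc mult.commute)
    qed simp
  qed
  also have "\<dots> = (ennreal S * ennreal (E \<tau>)) * (\<integral>\<^sup>+ u. g u * exp_neg (G u) * indicator D u \<partial>lborel)"
    unfolding D_def by (rule nn_integral_cmult) measurable
  finally have I1: "(\<integral>\<^sup>+ u. exp_neg (F u) * (ennreal S * (Q u + ennreal c * mom p \<rho> u) * ennreal (E u)) * indicator D u \<partial>lborel)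
      = (ennreal S * ennreal (E \<tau>)) * (\<integral>\<^sup>+ u. g u * exp_neg (G u) * indicator D u \<partial>lborel)" .
  have Et: "E t = 1" by (simp add: E_def)
  have Ft: "exp_neg (F t) = ennreal (E \<tau>) * exp_neg (G t)" using key[OF \<tau>t order_refl] by (simp add: Et)
  have CLi: "(\<integral>\<^sup>+ u. g u * exp_neg (G u) * indicator D u \<partial>lborel) + exp_neg (G t) \<le> 1"
    unfolding G_def D_def by (rule CL[OF gm]) auto
  have "(\<integral>\<^sup>+ u. exp_neg (F u) * (ennreal S * (Q u + ennreal c * mom p \<rho> u) * ennreal (E u)) * indicator D u \<partial>lborel)
        + ennreal S * exp_neg (F t)
      = (ennreal S * ennreal (E \<tau>)) * ((\<integral>\<^sup>+ u. g u * exp_neg (G u) * indicator D u \<partial>lborel) + exp_neg (G t))"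
    unfolding I1 Ft by (simp add: distrib_left mult_ac)
  also have "\<dots> \<le> (ennreal S * ennreal (E \<tau>)) * 1" using CLi by (rule mult_left_mono) simp
  also have "\<dots> = ennreal (S * E \<tau>)" using S0 by (simp add: ennreal_mult E_def)
  finally show ?thesis unfolding F_def Q_def E_def D_def .
qed


definition hfun :: "real \<Rightarrow> real \<Rightarrow> (real \<Rightarrow> 'a::euclidean_space measure) \<Rightarrow> real \<Rightarrow> real \<Rightarrow> 'a kstate \<Rightarrow> ennreal" where
  "hfun p c \<rho> s t y = indicator {ereal s..ereal t} (fst y) *
     ennreal (Ssum p (fst (snd y)) (snd (snd y)) * exp (c * (Ir p \<rho> s t - Ir p \<rho> s (real_of_ereal (fst y)))))"

lemma Ssum_branch:
  assumes "i < k"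
  shows "Ssum p (Suc (Suc k)) (branch f k i w \<sigma>) = Ssum p k f - Wt p (fst (f i))
     + Wt p (vpost (fst (f i)) w \<sigma>) + Wt p (vpost_star (fst (f i)) w \<sigma>) + Wt p w"
proof -
  define a where "a = (vpost (fst (f i)) w \<sigma>, snd (f i))"
  have br: "branch f k i w \<sigma> = f(i := a, k := (vpost_star (fst (f i)) w \<sigma>, snd (f i)), Suc k := (w, \<not> snd (f i)))"
    unfolding branch_def a_def by (simp add: Let_def)
  have low: "(\<Sum>j<k. Wt p (fst ((f(i := a)) j))) = (\<Sum>j<k. Wt p (fst (f j))) - Wt p (fst (f i)) + Wt p (fst a)"
  proof -
    have iin: "i \<in> {..<k}" using assms by simp
    have "(\<Sum>j<k. Wt p (fst ((f(i := a)) j))) = Wt p (fst a) + (\<Sum>j\<in>{..<k} - {i}. Wt p (fst ((f(i := a)) j)))"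
      using sum.remove[OF _ iin, of "\<lambda>j. Wt p (fst ((f(i := a)) j))"] by simp
    also have "(\<Sum>j\<in>{..<k} - {i}. Wt p (fst ((f(i := a)) j))) = (\<Sum>j\<in>{..<k} - {i}. Wt p (fst (f j)))"
      by (intro sum.cong) auto
    also have "\<dots> = (\<Sum>j<k. Wt p (fst (f j))) - Wt p (fst (f i))"
      using sum.remove[OF _ iin, of "\<lambda>j. Wt p (fst (f j))"] by simp
    finally show ?thesis by simp
  qed
  have "(\<Sum>j<Suc (Suc k). Wt p (fst ((branch f k i w \<sigma>) j)))
      = (\<Sum>j<k. Wt p (fst ((branch f k i w \<sigma>) j))) + Wt p (fst ((branch f k i w \<sigma>) k)) + Wt p (fst ((branch f k i w \<sigma>) (Suc k)))"
    by simp
  also have "(\<Sum>j<k. Wt p (fst ((branch f k i w \<sigma>) j))) = (\<Sum>j<k. Wt p (fst ((f(i := a)) j)))"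
    unfolding br by (intro sum.cong) auto
  finally show ?thesis unfolding Ssum_def low using assms by (simp add: br a_def)
qed

lemma particle_bound:
  fixes B :: "'a::euclidean_space \<Rightarrow> 'a measure" and N :: "'a measure"
  assumes ck: "collision_kernel B" and lbp: "LBP B" and N: "sets N = sets borel"
    and Sb: "\<And>w \<sigma>. norm \<sigma> = 1 \<Longrightarrow> Sb w \<sigma> \<le> S + M v w"
    and M0: "\<And>w. 0 \<le> M v w"
    and M2: "\<And>w. 2 * norm (v - w) * M v w \<le> c0 * Wt p v * (1 + norm w powr (p + 1))"
    and E0: "0 \<le> E" and S0: "0 \<le> S"
  shows "(\<integral>\<^sup>+ w. \<integral>\<^sup>+ \<sigma>. 2 * ennreal (Sb w \<sigma> * E) \<partial>B (v - w) \<partial>N)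
     \<le> ennreal (E * S) * (\<integral>\<^sup>+ w. ennreal (2 * norm (v - w)) \<partial>N)
       + ennreal (E * c0 * Wt p v) * (\<integral>\<^sup>+ w. ennreal (1 + norm w powr (p + 1)) \<partial>N)"
proof -
  have inner: "(\<integral>\<^sup>+ \<sigma>. 2 * ennreal (Sb w \<sigma> * E) \<partial>B (v - w))
      \<le> ennreal (E * S) * ennreal (2 * norm (v - w)) + ennreal (E * c0 * Wt p v) * ennreal (1 + norm w powr (p + 1))" for w
  proof -
    have "(\<integral>\<^sup>+ \<sigma>. 2 * ennreal (Sb w \<sigma> * E) \<partial>B (v - w)) \<le> (\<integral>\<^sup>+ \<sigma>. ennreal (2 * (S + M v w) * E) \<partial>B (v - w))"
    proof (intro nn_integral_mono_AE)
      show "AE \<sigma> in B (v - w). 2 * ennreal (Sb w \<sigma> * E) \<le> ennreal (2 * (S + M v w) * E)"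
        using ck_AE_sphere[OF ck, of "v - w"]
      proof eventually_elim
        case (elim \<sigma>)
        have "Sb w \<sigma> * E \<le> (S + M v w) * E" using Sb[OF elim] E0 by (intro mult_right_mono) auto
        then have "ennreal (Sb w \<sigma> * E) \<le> ennreal ((S + M v w) * E)" by (rule ennreal_leI)
        then have "2 * ennreal (Sb w \<sigma> * E) \<le> 2 * ennreal ((S + M v w) * E)" by (rule mult_left_mono) simp
        also have "2 * ennreal ((S + M v w) * E) = ennreal (2 * (S + M v w) * E)"
          unfolding mult.assoc[of 2] by (subst ennreal_mult') auto
        finally show ?case .
      qed
    qed
    also have "\<dots> = ennreal (2 * (S + M v w) * E) * ennreal (norm (v - w))"
      by (simp add: ck_mass[OF ck lbp])
    also have "\<dots> = ennreal (E * S * (2 * norm (v - w)) + E * (2 * norm (v - w) * M v w))"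
      using S0 E0 M0[of w] by (subst ennreal_mult[symmetric]) (auto simp: algebra_simps)
    also have "\<dots> \<le> ennreal (E * S * (2 * norm (v - w)) + E * (c0 * Wt p v * (1 + norm w powr (p + 1))))"
      using M2[of w] E0 by (intro ennreal_leI add_left_mono mult_left_mono) auto
    also have "\<dots> = ennreal (E * S) * ennreal (2 * norm (v - w)) + ennreal (E * c0 * Wt p v) * ennreal (1 + norm w powr (p + 1))"
    proof -
      have c0': "0 \<le> E * (c0 * Wt p v * (1 + norm w powr (p + 1)))"
        using E0 M2[of w] M0[of w] by (smt (verit) mult_nonneg_nonneg norm_ge_zero)
      have "ennreal (E * S * (2 * norm (v - w)) + E * (c0 * Wt p v * (1 + norm w powr (p + 1))))
          = ennreal (E * S * (2 * norm (v - w))) + ennreal (E * (c0 * Wt p v * (1 + norm w powr (p + 1))))"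
        using E0 S0 c0' by (intro ennreal_plus) auto
      also have "ennreal (E * S * (2 * norm (v - w))) = ennreal (E * S) * ennreal (2 * norm (v - w))"
        using E0 S0 by (intro ennreal_mult) auto
      also have "ennreal (E * (c0 * Wt p v * (1 + norm w powr (p + 1)))) = ennreal (E * c0 * Wt p v) * ennreal (1 + norm w powr (p + 1))"
      proof (cases "E * c0 * Wt p v \<ge> 0")
        case True
        then show ?thesis by (subst ennreal_mult[symmetric]) (auto simp: mult_ac add_nonneg_nonneg)
      next
        case False
        then have "E * (c0 * Wt p v * (1 + norm w powr (p + 1))) \<le> 0"
          by (smt (verit) mult_nonneg_nonneg mult.assoc powr_ge_zero mult_le_0_iff)
        then show ?thesis using False by (simp add: ennreal_neg)
      qed
      finally show ?thesis .
    qed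
    finally show ?thesis .
  qed
  have "(\<integral>\<^sup>+ w. \<integral>\<^sup>+ \<sigma>. 2 * ennreal (Sb w \<sigma> * E) \<partial>B (v - w) \<partial>N)
      \<le> (\<integral>\<^sup>+ w. ennreal (E * S) * ennreal (2 * norm (v - w)) + ennreal (E * c0 * Wt p v) * ennreal (1 + norm w powr (p + 1)) \<partial>N)"
    by (intro nn_integral_mono inner)
  also have "\<dots> = ennreal (E * S) * (\<integral>\<^sup>+ w. ennreal (2 * norm (v - w)) \<partial>N)
       + ennreal (E * c0 * Wt p v) * (\<integral>\<^sup>+ w. ennreal (1 + norm w powr (p + 1)) \<partial>N)"
    using N by (simp add: nn_integral_add nn_integral_cmult measurable_cong_sets[OF N refl])
  finally show ?thesis .
qed


lemma Kh_bound:
  fixes B :: "'a::euclidean_space \<Rightarrow> 'a measure" and \<rho> :: "real \<Rightarrow> 'a measure" and M :: "'a \<Rightarrow> 'a \<Rightarrow> real"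
  assumes ck: "collision_kernel B" and lbp: "LBP B" and env: "environment \<rho>"
    and s0: "0 \<le> s" and s\<tau>: "s \<le> \<tau>" and \<tau>t: "\<tau> \<le> t"
    and HM1: "\<And>v w \<sigma>. norm \<sigma> = 1 \<Longrightarrow> Wt p (vpost v w \<sigma>) + Wt p (vpost_star v w \<sigma>) + Wt p w - Wt p v \<le> M v w"
    and M0: "\<And>v w. 0 \<le> M v w"
    and M2: "\<And>v w. 2 * norm (v - w) * M v w \<le> c0 * Wt p v * (1 + norm w powr (p + 1))"
    and c00: "0 \<le> c0"
  shows "kac_step B \<rho> (hfun p c \<rho> s t) (ereal \<tau>, k, f) \<le>
     (\<integral>\<^sup>+ u. exp_neg (\<integral>\<^sup>+ r. kac_total_rate B \<rho> r k f * indicator {\<tau>..u} r \<partial>lborel) *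
        (ennreal (Ssum p k f) * (kac_total_rate B \<rho> u k f + ennreal c0 * mom p \<rho> u) * ennreal (exp (c * (Ir p \<rho> s t - Ir p \<rho> s u))))
        * indicator {\<tau><..t} u \<partial>lborel)"
proof -
  define S where "S = Ssum p k f"
  have S0: "0 \<le> S" unfolding S_def by (rule Ssum_nonneg)
  define eF where "eF u = exp_neg (\<integral>\<^sup>+ r. kac_total_rate B \<rho> r k f * indicator {\<tau>..u} r \<partial>lborel)" for u
  define E where "E u = exp (c * (Ir p \<rho> s t - Ir p \<rho> s u))" for u
  define Z where "Z u = (\<Sum>i<k. \<integral>\<^sup>+ w. \<integral>\<^sup>+ \<sigma>. 2 * hfun p c \<rho> s t (ereal u, Suc (Suc k), branch f k i w \<sigma>)
                                      \<partial>B (fst (f i) - w) \<partial>\<rho> u)" for u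
  have ks: "kac_step B \<rho> (hfun p c \<rho> s t) (ereal \<tau>, k, f)
      = (\<integral>\<^sup>+ u. (eF u * Z u) * indicator {\<tau><..} u \<partial>lborel)
        + exp_neg (\<integral>\<^sup>+ r. kac_total_rate B \<rho> r k f * indicator {\<tau>..} r \<partial>lborel) * hfun p c \<rho> s t (\<infinity>, k, f)"
    unfolding kac_step_def eF_def Z_def by simp
  have hinf: "hfun p c \<rho> s t (\<infinity>, k, f) = 0" by (simp add: hfun_def)
  have Zb: "Z u \<le> ennreal S * (kac_total_rate B \<rho> u k f + ennreal c0 * mom p \<rho> u) * ennreal (E u)"
    if u: "s \<le> u" "u \<le> t" for u
  proof -
    have E0: "0 \<le> E u" by (simp add: E_def)
    have hv: "hfun p c \<rho> s t (ereal u, Suc (Suc k), br) = ennreal (Ssum p (Suc (Suc k)) br * E u)" for br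
      using u by (simp add: hfun_def E_def)
    have "Z u = (\<Sum>i<k. \<integral>\<^sup>+ w. \<integral>\<^sup>+ \<sigma>. 2 * ennreal (Ssum p (Suc (Suc k)) (branch f k i w \<sigma>) * E u)
                                      \<partial>B (fst (f i) - w) \<partial>\<rho> u)"
      unfolding Z_def hv ..
    also have "\<dots> \<le> (\<Sum>i<k. ennreal (E u * S) * kac_rate B \<rho> u (fst (f i))
                     + ennreal (E u * c0 * Wt p (fst (f i))) * mom p \<rho> u)"
    proof (intro sum_mono)
      fix i assume i: "i \<in> {..<k}"
      show "(\<integral>\<^sup>+ w. \<integral>\<^sup>+ \<sigma>. 2 * ennreal (Ssum p (Suc (Suc k)) (branch f k i w \<sigma>) * E u) \<partial>B (fst (f i) - w) \<partial>\<rho> u)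
          \<le> ennreal (E u * S) * kac_rate B \<rho> u (fst (f i)) + ennreal (E u * c0 * Wt p (fst (f i))) * mom p \<rho> u"
        unfolding kac_rate_eq[OF ck lbp] mom_def
      proof (rule particle_bound[OF ck lbp env_sets[OF env]])
        fix w \<sigma> :: 'a assume "norm \<sigma> = 1"
        then show "Ssum p (Suc (Suc k)) (branch f k i w \<sigma>) \<le> S + M (fst (f i)) w"
          using Ssum_branch[of i k p f w \<sigma>] i HM1[of \<sigma> "fst (f i)" w] unfolding S_def by simp
      qed (use M0 M2 E0 S0 in auto)
    qed
    also have "\<dots> = ennreal (E u * S) * kac_total_rate B \<rho> u k f + ennreal (E u * c0 * S) * mom p \<rho> u"
    proof -
      have "(\<Sum>i<k. ennreal (E u * c0 * Wt p (fst (f i))) * mom p \<rho> u) = ennreal (E u * c0 * S) * mom p \<rho> u"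
      proof -
        have "(\<Sum>i<k. ennreal (E u * c0 * Wt p (fst (f i)))) = ennreal (\<Sum>i<k. E u * c0 * Wt p (fst (f i)))"
          using E0 c00 by (intro sum_ennreal) (auto simp: Wt_nonneg)
        also have "(\<Sum>i<k. E u * c0 * Wt p (fst (f i))) = E u * c0 * S"
          unfolding S_def Ssum_def by (simp add: sum_distrib_left)
        finally show ?thesis by (simp add: sum_distrib_right[symmetric])
      qed
      then show ?thesis
        by (simp add: sum.distrib kac_total_rate_def sum_distrib_left)
    qed
    also have "\<dots> = ennreal S * (kac_total_rate B \<rho> u k f + ennreal c0 * mom p \<rho> u) * ennreal (E u)"
      using E0 S0 c00 by (simp add: ennreal_mult distrib_left distrib_right mult_ac)
    finally show ?thesis .
  qed
  have "(\<integral>\<^sup>+ u. (eF u * Z u) * indicator {\<tau><..} u \<partial>lborel)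
      \<le> (\<integral>\<^sup>+ u. eF u * (ennreal S * (kac_total_rate B \<rho> u k f + ennreal c0 * mom p \<rho> u) * ennreal (E u)) * indicator {\<tau><..t} u \<partial>lborel)"
  proof (intro nn_integral_mono)
    fix u
    show "(eF u * Z u) * indicator {\<tau><..} u
        \<le> eF u * (ennreal S * (kac_total_rate B \<rho> u k f + ennreal c0 * mom p \<rho> u) * ennreal (E u)) * indicator {\<tau><..t} u"
    proof (cases "\<tau> < u")
      case True
      show ?thesis
      proof (cases "u \<le> t")
        case True
        then show ?thesis using \<open>\<tau> < u\<close> s\<tau> Zb[of u] by (simp add: mult_left_mono)
      next
        case False
        then have "Z u = 0" unfolding Z_def by (simp add: hfun_def)
        then show ?thesis by simp
      qed
    qed simp
  qed
  then show ?thesis unfolding ks hinf eF_def E_def S_def by simp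
qed


lemma Kh_zero:
  assumes "t < \<tau>"
  shows "kac_step B \<rho> (hfun p c \<rho> s t) (ereal \<tau>, k, f) = 0"
proof -
  have "(\<integral>\<^sup>+ u \<in> {\<tau><..}. exp_neg (\<integral>\<^sup>+ r \<in> {\<tau>..u}. kac_total_rate B \<rho> r k f \<partial>lborel) *
                (\<Sum>i<k. \<integral>\<^sup>+ w. \<integral>\<^sup>+ \<sigma>. 2 * hfun p c \<rho> s t (ereal u, Suc (Suc k), branch f k i w \<sigma>)
                                      \<partial>B (fst (f i) - w) \<partial>\<rho> u) \<partial>lborel) = 0"
    using assms by (intro nn_integral_zero') (auto simp: indicator_def hfun_def)
  then show ?thesis by (simp add: kac_step_def hfun_def)
qed

lemma Kg_moment:
  fixes B :: "'a::euclidean_space \<Rightarrow> 'a measure" and \<rho> :: "real \<Rightarrow> 'a measure"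
  assumes "\<tau> \<le> t"
  shows "kac_step B \<rho> (\<lambda>y. indicator {ereal t<..} (fst y)) (ereal \<tau>, k, f)
    \<le> (\<integral>\<^sup>+ u. exp_neg (\<integral>\<^sup>+ r. kac_total_rate B \<rho> r k f * indicator {\<tau>..u} r \<partial>lborel) * kac_total_rate B \<rho> u k f * indicator {t<..} u \<partial>lborel)
      + exp_neg (\<integral>\<^sup>+ r. kac_total_rate B \<rho> r k f * indicator {\<tau>..} r \<partial>lborel)"
proof -
  have "kac_step B \<rho> (\<lambda>y. indicator {ereal t<..} (fst y)) (ereal \<tau>, k, f)
    = (\<integral>\<^sup>+ u. (exp_neg (\<integral>\<^sup>+ r. kac_total_rate B \<rho> r k f * indicator {\<tau>..u} r \<partial>lborel) *
         (\<Sum>i<k. \<integral>\<^sup>+ w. \<integral>\<^sup>+ \<sigma>. 2 * indicator {ereal t<..} (ereal u) \<partial>B (fst (f i) - w) \<partial>\<rho> u)) * indicator {\<tau><..} u \<partial>lborel)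
      + exp_neg (\<integral>\<^sup>+ r. kac_total_rate B \<rho> r k f * indicator {\<tau>..} r \<partial>lborel)"
    by (simp add: kac_step_def)
  also have "(\<integral>\<^sup>+ u. (exp_neg (\<integral>\<^sup>+ r. kac_total_rate B \<rho> r k f * indicator {\<tau>..u} r \<partial>lborel) *
         (\<Sum>i<k. \<integral>\<^sup>+ w. \<integral>\<^sup>+ \<sigma>. 2 * indicator {ereal t<..} (ereal u) \<partial>B (fst (f i) - w) \<partial>\<rho> u)) * indicator {\<tau><..} u \<partial>lborel)
     = (\<integral>\<^sup>+ u. exp_neg (\<integral>\<^sup>+ r. kac_total_rate B \<rho> r k f * indicator {\<tau>..u} r \<partial>lborel) * kac_total_rate B \<rho> u k f * indicator {t<..} u \<partial>lborel)"
  proof (intro nn_integral_cong)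
    fix u
    show "(exp_neg (\<integral>\<^sup>+ r. kac_total_rate B \<rho> r k f * indicator {\<tau>..u} r \<partial>lborel) *
         (\<Sum>i<k. \<integral>\<^sup>+ w. \<integral>\<^sup>+ \<sigma>. 2 * indicator {ereal t<..} (ereal u) \<partial>B (fst (f i) - w) \<partial>\<rho> u)) * indicator {\<tau><..} u
        = exp_neg (\<integral>\<^sup>+ r. kac_total_rate B \<rho> r k f * indicator {\<tau>..u} r \<partial>lborel) * kac_total_rate B \<rho> u k f * indicator {t<..} u"
    proof (cases "t < u")
      case True
      then show ?thesis using assms by (simp add: kac_total_rate_def kac_rate_def indicator_def)
    qed (simp add: indicator_def)
  qed
  finally show ?thesis by simp
qed

lemma Kg_nonexp:
  fixes B :: "'a::euclidean_space \<Rightarrow> 'a measure" and \<rho> :: "real \<Rightarrow> 'a measure"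
  shows "kac_step B \<rho> (\<lambda>y. indicator {..ereal t} (fst y)) (ereal \<tau>, k, f)
    \<le> (\<integral>\<^sup>+ u. exp_neg (\<integral>\<^sup>+ r. kac_total_rate B \<rho> r k f * indicator {\<tau>..u} r \<partial>lborel) * kac_total_rate B \<rho> u k f * indicator {\<tau><..t} u \<partial>lborel)"
proof -
  have "kac_step B \<rho> (\<lambda>y. indicator {..ereal t} (fst y)) (ereal \<tau>, k, f)
    = (\<integral>\<^sup>+ u. (exp_neg (\<integral>\<^sup>+ r. kac_total_rate B \<rho> r k f * indicator {\<tau>..u} r \<partial>lborel) *
         (\<Sum>i<k. \<integral>\<^sup>+ w. \<integral>\<^sup>+ \<sigma>. 2 * indicator {..ereal t} (ereal u) \<partial>B (fst (f i) - w) \<partial>\<rho> u)) * indicator {\<tau><..} u \<partial>lborel)"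
    by (simp add: kac_step_def)
  also have "\<dots> = (\<integral>\<^sup>+ u. exp_neg (\<integral>\<^sup>+ r. kac_total_rate B \<rho> r k f * indicator {\<tau>..u} r \<partial>lborel) * kac_total_rate B \<rho> u k f * indicator {\<tau><..t} u \<partial>lborel)"
  proof (intro nn_integral_cong)
    fix u
    show "(exp_neg (\<integral>\<^sup>+ r. kac_total_rate B \<rho> r k f * indicator {\<tau>..u} r \<partial>lborel) *
         (\<Sum>i<k. \<integral>\<^sup>+ w. \<integral>\<^sup>+ \<sigma>. 2 * indicator {..ereal t} (ereal u) \<partial>B (fst (f i) - w) \<partial>\<rho> u)) * indicator {\<tau><..} u
        = exp_neg (\<integral>\<^sup>+ r. kac_total_rate B \<rho> r k f * indicator {\<tau>..u} r \<partial>lborel) * kac_total_rate B \<rho> u k f * indicator {\<tau><..t} u"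
    proof (cases "u \<le> t")
      case True
      then show ?thesis by (simp add: kac_total_rate_def kac_rate_def indicator_def)
    qed (simp add: indicator_def)
  qed
  finally show ?thesis by simp
qed

definition phiM :: "real \<Rightarrow> real \<Rightarrow> 'a::euclidean_space kstate \<Rightarrow> ennreal" where
  "phiM p t y = indicator {..ereal t} (fst y) * ennreal (Ssum p (fst (snd y)) (snd (snd y)))"

lemma onestep_moment:
  fixes B :: "'a::euclidean_space \<Rightarrow> 'a measure" and \<rho> :: "real \<Rightarrow> 'a measure" and M :: "'a \<Rightarrow> 'a \<Rightarrow> real"
  assumes ck: "collision_kernel B" and lbp: "LBP B" and env: "environment \<rho>"
    and s0: "0 \<le> s" and fin: "II p \<rho> s t < \<infinity>" and c0: "0 \<le> c"
    and HM1: "\<And>v w \<sigma>. norm \<sigma> = 1 \<Longrightarrow> Wt p (vpost v w \<sigma>) + Wt p (vpost_star v w \<sigma>) + Wt p w - Wt p v \<le> M v w"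
    and M0: "\<And>v w. 0 \<le> M v w"
    and M2: "\<And>v w. 2 * norm (v - w) * M v w \<le> c * Wt p v * (1 + norm w powr (p + 1))"
    and y: "ereal s \<le> fst y"
  shows "phiM p t y * kac_step B \<rho> (\<lambda>y. indicator {ereal t<..} (fst y)) y + kac_step B \<rho> (hfun p c \<rho> s t) y
         \<le> hfun p c \<rho> s t y"
proof -
  obtain \<tau>e k f where yy: "y = (\<tau>e, k, f)" by (cases y) auto
  show ?thesis
  proof (cases \<tau>e)
    case PInf
    then show ?thesis using yy by (simp add: phiM_def kac_step_def)
  next
    case MInf
    then show ?thesis using yy y by simp
  next
    case (real \<tau>)
    have s\<tau>: "s \<le> \<tau>" using y yy real by simp
    show ?thesis
    proof (cases "\<tau> \<le> t")
      case False
      then show ?thesis using yy real by (simp add: phiM_def Kh_zero)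
    next
      case True
      define S where "S = Ssum p k f"
      have S0: "0 \<le> S" unfolding S_def by (rule Ssum_nonneg)
      define eF where "eF u = exp_neg (\<integral>\<^sup>+ r. kac_total_rate B \<rho> r k f * indicator {\<tau>..u} r \<partial>lborel)" for u
      define Q where "Q u = kac_total_rate B \<rho> u k f" for u
      define eI where "eI = exp_neg (\<integral>\<^sup>+ r. kac_total_rate B \<rho> r k f * indicator {\<tau>..} r \<partial>lborel)"
      define J where "J = (\<integral>\<^sup>+ u. eF u * (ennreal S * (Q u + ennreal c * mom p \<rho> u) * ennreal (exp (c * (Ir p \<rho> s t - Ir p \<rho> s u)))) * indicator {\<tau><..t} u \<partial>lborel)"
      have phi: "phiM p t y = ennreal S" using yy real True by (simp add: phiM_def S_def)
      have hy: "hfun p c \<rho> s t y = ennreal (S * exp (c * (Ir p \<rho> s t - Ir p \<rho> s \<tau>)))"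
        using yy real True s\<tau> by (simp add: hfun_def S_def)
      have Kg: "kac_step B \<rho> (\<lambda>y. indicator {ereal t<..} (fst y)) y \<le> eF t"
      proof -
        have "kac_step B \<rho> (\<lambda>y. indicator {ereal t<..} (fst y)) y
            \<le> (\<integral>\<^sup>+ u. eF u * Q u * indicator {t<..} u \<partial>lborel) + eI"
          unfolding yy real eF_def Q_def eI_def by (rule Kg_moment[OF True])
        also have "\<dots> \<le> eF t"
          unfolding eF_def Q_def eI_def by (rule tail_bound[OF ck lbp env _ True]) (use s0 s\<tau> in simp)
        finally show ?thesis .
      qed
      have Kh: "kac_step B \<rho> (hfun p c \<rho> s t) y \<le> J"
        unfolding yy real J_def eF_def Q_def S_def
        by (rule Kh_bound[OF ck lbp env s0 s\<tau> True HM1 M0 M2 c0])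
      have "phiM p t y * kac_step B \<rho> (\<lambda>y. indicator {ereal t<..} (fst y)) y + kac_step B \<rho> (hfun p c \<rho> s t) y
          \<le> ennreal S * eF t + J"
        unfolding phi using Kg Kh by (intro add_mono mult_left_mono) auto
      also have "\<dots> = J + ennreal S * eF t" by (simp add: add.commute)
      also have "\<dots> \<le> ennreal (S * exp (c * (Ir p \<rho> s t - Ir p \<rho> s \<tau>)))"
        unfolding J_def eF_def Q_def
        by (rule body_bound[OF ck lbp env s0 s\<tau> True fin c0 S0])
      finally show ?thesis unfolding hy .
    qed
  qed
qed


lemma Q_bound_nonexp:
  fixes B :: "'a::euclidean_space \<Rightarrow> 'a measure" and \<rho> :: "real \<Rightarrow> 'a measure"
  assumes ck: "collision_kernel B" and lbp: "LBP B" and env: "environment \<rho>"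
  shows "kac_total_rate B \<rho> u k f \<le> ennreal (3 * Ssum 2 k f) * mom 2 \<rho> u"
proof -
  have "kac_total_rate B \<rho> u k f = (\<Sum>i<k. \<integral>\<^sup>+ w. ennreal (2 * norm (fst (f i) - w)) \<partial>\<rho> u)"
    unfolding kac_total_rate_def kac_rate_eq[OF ck lbp] ..
  also have "\<dots> \<le> (\<Sum>i<k. \<integral>\<^sup>+ w. ennreal (3 * Wt 2 (fst (f i))) * ennreal (1 + norm w powr (2 + 1)) \<partial>\<rho> u)"
  proof (intro sum_mono nn_integral_mono)
    fix i w
    have "ennreal (2 * norm (fst (f i) - w)) \<le> ennreal (3 * Wt 2 (fst (f i)) * (1 + norm w powr (2 + 1)))"
      by (intro ennreal_leI) (rule rate_nonexp)
    also have "\<dots> = ennreal (3 * Wt 2 (fst (f i))) * ennreal (1 + norm w powr (2 + 1))"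
      by (intro ennreal_mult) (auto simp: Wt_nonneg)
    finally show "ennreal (2 * norm (fst (f i) - w)) \<le> \<dots>" .
  qed
  also have "\<dots> = (\<Sum>i<k. ennreal (3 * Wt 2 (fst (f i))) * mom 2 \<rho> u)"
    unfolding mom_def by (intro sum.cong refl nn_integral_cmult) (simp add: measurable_cong_sets[OF env_sets[OF env] refl])
  also have "\<dots> = ennreal (3 * Ssum 2 k f) * mom 2 \<rho> u"
  proof -
    have "(\<Sum>i<k. ennreal (3 * Wt 2 (fst (f i)))) = ennreal (\<Sum>i<k. 3 * Wt 2 (fst (f i)))"
      by (intro sum_ennreal) (auto simp: Wt_nonneg)
    then show ?thesis unfolding Ssum_def by (simp add: sum_distrib_right[symmetric] sum_distrib_left)
  qed
  finally show ?thesis .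
qed

lemma onestep_nonexp:
  fixes B :: "'a::euclidean_space \<Rightarrow> 'a measure" and \<rho> :: "real \<Rightarrow> 'a measure"
  assumes ck: "collision_kernel B" and lbp: "LBP B" and env: "environment \<rho>"
    and s0: "0 \<le> s" and fin: "II 2 \<rho> s t < \<infinity>"
    and y: "ereal s \<le> fst y"
  shows "1 * kac_step B \<rho> (\<lambda>y. indicator {..ereal t} (fst y)) y + kac_step B \<rho> (hfun 2 11 \<rho> s t) y
         \<le> hfun 2 11 \<rho> s t y"
proof -
  obtain \<tau>e k f where yy: "y = (\<tau>e, k, f)" by (cases y) auto
  show ?thesis
  proof (cases \<tau>e)
    case PInf
    then show ?thesis using yy by (simp add: kac_step_def)
  next
    case MInf
    then show ?thesis using yy y by simp
  next
    case (real \<tau>)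
    have s\<tau>: "s \<le> \<tau>" using y yy real by simp
    show ?thesis
    proof (cases "\<tau> \<le> t")
      case False
      have "kac_step B \<rho> (\<lambda>y. indicator {..ereal t} (fst y)) y \<le> 0"
        using Kg_nonexp[of B \<rho> t \<tau> k f] False unfolding yy real by simp
      then show ?thesis using yy real False by (simp add: Kh_zero)
    next
      case True
      define S where "S = Ssum 2 k f"
      have S0: "0 \<le> S" unfolding S_def by (rule Ssum_nonneg)
      define eF where "eF u = exp_neg (\<integral>\<^sup>+ r. kac_total_rate B \<rho> r k f * indicator {\<tau>..u} r \<partial>lborel)" for u
      define Q where "Q u = kac_total_rate B \<rho> u k f" for u
      define E where "E u = exp (11 * (Ir 2 \<rho> s t - Ir 2 \<rho> s u))" for u
      define D where "D = {\<tau><..t}"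
      have hy: "hfun 2 11 \<rho> s t y = ennreal (S * E \<tau>)"
        using yy real True s\<tau> by (simp add: hfun_def S_def E_def)
      have Kg: "kac_step B \<rho> (\<lambda>y. indicator {..ereal t} (fst y)) y \<le> (\<integral>\<^sup>+ u. eF u * Q u * indicator D u \<partial>lborel)"
        unfolding yy real eF_def Q_def D_def by (rule Kg_nonexp)
      have h1: "\<And>v w \<sigma>. norm \<sigma> = 1 \<Longrightarrow> Wt 2 (vpost v w \<sigma>) + Wt 2 (vpost_star v w \<sigma>) + Wt 2 w - Wt 2 v \<le> (\<lambda>v w. 2 + 2 * norm w ^ 2) v (w::'a)"
        by (rule inc_2)
      have h2: "\<And>v w. 0 \<le> (\<lambda>v w. 2 + 2 * norm w ^ 2) v (w::'a)" by simp
      have h3: "\<And>v w. 2 * norm (v - w) * (\<lambda>v w. 2 + 2 * norm w ^ 2) v (w::'a) \<le> 8 * Wt 2 v * (1 + norm w powr (2 + 1))"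
        by (rule rate_2)
      have c8: "0 \<le> (8::real)" by simp
      have Kh: "kac_step B \<rho> (hfun 2 11 \<rho> s t) y
          \<le> (\<integral>\<^sup>+ u. eF u * (ennreal S * (Q u + ennreal 8 * mom 2 \<rho> u) * ennreal (E u)) * indicator D u \<partial>lborel)"
        unfolding yy real eF_def Q_def S_def E_def D_def
        by (rule Kh_bound[OF ck lbp env s0 s\<tau> True h1 h2 h3 c8])
      have E1: "1 \<le> E u" if "u \<le> t" for u
      proof -
        have "II 2 \<rho> s u \<le> II 2 \<rho> s t" using that by (rule II_mono)
        then have "Ir 2 \<rho> s u \<le> Ir 2 \<rho> s t" unfolding Ir_def using fin by (intro enn2real_mono) auto
        then show ?thesis by (simp add: E_def)
      qed
      have "1 * kac_step B \<rho> (\<lambda>y. indicator {..ereal t} (fst y)) y + kac_step B \<rho> (hfun 2 11 \<rho> s t) y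
          \<le> (\<integral>\<^sup>+ u. eF u * Q u * indicator D u \<partial>lborel)
            + (\<integral>\<^sup>+ u. eF u * (ennreal S * (Q u + ennreal 8 * mom 2 \<rho> u) * ennreal (E u)) * indicator D u \<partial>lborel)"
        using Kg Kh by (simp add: add_mono)
      also have "\<dots> \<le> (\<integral>\<^sup>+ u. eF u * Q u * indicator D u + eF u * (ennreal S * (Q u + ennreal 8 * mom 2 \<rho> u) * ennreal (E u)) * indicator D u \<partial>lborel)"
        by (rule nn_integral_superadd)
      also have "\<dots> \<le> (\<integral>\<^sup>+ u. eF u * (ennreal S * (Q u + ennreal 11 * mom 2 \<rho> u) * ennreal (E u)) * indicator D u \<partial>lborel)"
      proof (intro nn_integral_mono)
        fix u
        show "eF u * Q u * indicator D u + eF u * (ennreal S * (Q u + ennreal 8 * mom 2 \<rho> u) * ennreal (E u)) * indicator D u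
            \<le> eF u * (ennreal S * (Q u + ennreal 11 * mom 2 \<rho> u) * ennreal (E u)) * indicator D u"
        proof (cases "u \<in> D")
          case True
          then have ut: "u \<le> t" by (simp add: D_def)
          have q: "Q u \<le> ennreal S * (ennreal 3 * mom 2 \<rho> u) * ennreal (E u)"
          proof -
            have "Q u \<le> ennreal (3 * S) * mom 2 \<rho> u" unfolding Q_def S_def by (rule Q_bound_nonexp[OF ck lbp env])
            also have "\<dots> = ennreal S * (ennreal 3 * mom 2 \<rho> u) * 1" using S0 by (simp add: ennreal_mult mult_ac)
            also have "\<dots> \<le> ennreal S * (ennreal 3 * mom 2 \<rho> u) * ennreal (E u)"
              using E1[OF ut] by (intro mult_left_mono) (auto simp: ennreal_leI[of 1, simplified])
            finally show ?thesis .
          qed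
          have e11: "ennreal 11 * mom 2 \<rho> u = ennreal 8 * mom 2 \<rho> u + ennreal 3 * mom 2 \<rho> u"
            by (simp add: distrib_right[symmetric] ennreal_plus[symmetric] del: ennreal_plus)
          have "Q u + ennreal S * (Q u + ennreal 8 * mom 2 \<rho> u) * ennreal (E u)
              \<le> ennreal S * (ennreal 3 * mom 2 \<rho> u) * ennreal (E u) + ennreal S * (Q u + ennreal 8 * mom 2 \<rho> u) * ennreal (E u)"
            using q by (rule add_right_mono)
          also have "\<dots> = ennreal S * (Q u + ennreal 11 * mom 2 \<rho> u) * ennreal (E u)"
            unfolding e11 by (simp add: distrib_left distrib_right mult_ac add_ac)
          finally have "Q u + ennreal S * (Q u + ennreal 8 * mom 2 \<rho> u) * ennreal (E u)
              \<le> ennreal S * (Q u + ennreal 11 * mom 2 \<rho> u) * ennreal (E u)" .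
          then have "eF u * (Q u + ennreal S * (Q u + ennreal 8 * mom 2 \<rho> u) * ennreal (E u))
              \<le> eF u * (ennreal S * (Q u + ennreal 11 * mom 2 \<rho> u) * ennreal (E u))"
            by (rule mult_left_mono) simp
          then show ?thesis using True by (simp add: distrib_left mult_ac)
        qed simp
      qed
      also have "\<dots> \<le> ennreal (S * E \<tau>)"
      proof -
        have "(\<integral>\<^sup>+ u. eF u * (ennreal S * (Q u + ennreal 11 * mom 2 \<rho> u) * ennreal (E u)) * indicator D u \<partial>lborel)
             + ennreal S * eF t \<le> ennreal (S * E \<tau>)"
          unfolding eF_def Q_def E_def D_def
          by (rule body_bound[OF ck lbp env s0 s\<tau> True fin _ S0]) simp
        moreover have "(\<integral>\<^sup>+ u. eF u * (ennreal S * (Q u + ennreal 11 * mom 2 \<rho> u) * ennreal (E u)) * indicator D u \<partial>lborel)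
             \<le> (\<integral>\<^sup>+ u. eF u * (ennreal S * (Q u + ennreal 11 * mom 2 \<rho> u) * ennreal (E u)) * indicator D u \<partial>lborel)
             + ennreal S * eF t" by (rule add_increasing2) auto
        ultimately show ?thesis by (rule order_trans[rotated])
      qed
      finally show ?thesis unfolding hy .
    qed
  qed
qed


lemma ks_fst[measurable]: "fst \<in> measurable (kstate_space :: 'a::euclidean_space kstate measure) borel"
  unfolding kstate_space_def by measurable

lemma Ssum_measurable[measurable]:
  "(\<lambda>y. Ssum p (fst (snd y)) (snd (snd y))) \<in> borel_measurable (kstate_space :: 'a::euclidean_space kstate measure)"
proof -
  have m1: "\<And>k. (\<lambda>y. \<Sum>i<k. Wt p (fst (snd (snd y) i))) \<in> borel_measurable (kstate_space :: 'a kstate measure)"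
    unfolding kstate_space_def Wt_def by measurable
  have m2: "(\<lambda>y. fst (snd y)) \<in> measurable (kstate_space :: 'a kstate measure) (count_space UNIV)"
    unfolding kstate_space_def by measurable
  show ?thesis unfolding Ssum_def
    using measurable_compose_countable[where f="\<lambda>k y. \<Sum>i<k. Wt p (fst (snd (snd y) i))" and g="\<lambda>y. fst (snd y)", OF m1 m2]
    by simp
qed

lemma Ir_measurable[measurable]:
  assumes env: "environment \<rho>" and s0: "0 \<le> s"
  shows "Ir p \<rho> s \<in> borel_measurable borel"
proof -
  have "II p \<rho> s = (\<lambda>u. \<integral>\<^sup>+ r. (indicator {0..} r * mom p \<rho> r) * indicator {s..u} r \<partial>lborel)"
    unfolding II_def using s0 by (intro ext int_restrict0) auto
  also have "\<dots> \<in> borel_measurable borel"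
    by (rule Gf_measurable_cl) (rule mom_measurable[OF env])
  finally show ?thesis unfolding Ir_def[abs_def] by measurable
qed

lemma hfun_measurable[measurable]:
  assumes env: "environment \<rho>" and s0: "0 \<le> s"
  shows "hfun p c \<rho> s t \<in> borel_measurable (kstate_space :: 'a::euclidean_space kstate measure)"
proof -
  note [measurable] = Ir_measurable[OF env s0]
  show ?thesis unfolding hfun_def[abs_def] by measurable
qed

lemma phiM_measurable[measurable]:
  "phiM p t \<in> borel_measurable (kstate_space :: 'a::euclidean_space kstate measure)"
  unfolding phiM_def[abs_def] by measurable

lemma gM_measurable[measurable]:
  "(\<lambda>y. indicator {ereal t<..} (fst y) :: ennreal) \<in> borel_measurable (kstate_space :: 'a::euclidean_space kstate measure)"
  by measurable

lemma gN_measurable[measurable]: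
  "(\<lambda>y. indicator {..ereal t} (fst y) :: ennreal) \<in> borel_measurable (kstate_space :: 'a::euclidean_space kstate measure)"
  by measurable

lemma hfun_x0: "s \<le> t \<Longrightarrow> hfun p c \<rho> s t (ereal s, 1, \<lambda>_. (v0, True))
   = ennreal ((1 + norm v0 powr p) * exp (c * enn2real (II p \<rho> s t)))"
  by (simp add: hfun_def Ssum_def Wt_def Ir_def II_empty)

lemma moment_general:
  fixes B :: "'a::euclidean_space \<Rightarrow> 'a measure" and \<rho> :: "real \<Rightarrow> 'a measure" and Mf :: "'a \<Rightarrow> 'a \<Rightarrow> real"
  assumes ck: "collision_kernel B" and lbp: "LBP B" and env: "environment \<rho>"
    and s0: "0 \<le> s" and P: "lin_kac_process B \<rho> s v0 M X" and st: "s \<le> t"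
    and fin: "II p \<rho> s t < \<infinity>" and c0: "0 \<le> c"
    and HM1: "\<And>v w \<sigma>. norm \<sigma> = 1 \<Longrightarrow> Wt p (vpost v w \<sigma>) + Wt p (vpost_star v w \<sigma>) + Wt p w - Wt p v \<le> Mf v w"
    and M0: "\<And>v w. 0 \<le> Mf v w"
    and M2: "\<And>v w. 2 * norm (v - w) * Mf v w \<le> c * Wt p v * (1 + norm w powr (p + 1))"
  shows "(\<integral>\<^sup>+ \<omega>. kac_pairing X (\<lambda>v. 1 + norm v powr p) t \<omega> \<partial>M)
      \<le> ennreal ((1 + norm v0 powr p) * exp (c * enn2real (II p \<rho> s t)))"
proof -
  have eq: "kac_pairing X (\<lambda>v. 1 + norm v powr p) t \<omega>
      = (\<Sum>n. phiM p t (X n \<omega>) * indicator {ereal t<..} (fst (X (Suc n) \<omega>)))" for \<omega>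
  proof -
    have "(if fst (X n \<omega>) \<le> ereal t \<and> ereal t < fst (X (Suc n) \<omega>)
          then (\<Sum>i < fst (snd (X n \<omega>)). ennreal (1 + norm (fst (snd (snd (X n \<omega>)) i)) powr p)) else 0)
        = phiM p t (X n \<omega>) * indicator {ereal t<..} (fst (X (Suc n) \<omega>))" for n
    proof -
      have "(\<Sum>i < fst (snd (X n \<omega>)). ennreal (1 + norm (fst (snd (snd (X n \<omega>)) i)) powr p))
          = ennreal (Ssum p (fst (snd (X n \<omega>))) (snd (snd (X n \<omega>))))"
        unfolding Ssum_def Wt_def by (intro sum_ennreal) (smt (verit) powr_ge_zero)
      then show ?thesis by (simp add: phiM_def indicator_def)
    qed
    then show ?thesis unfolding kac_pairing_def by simp
  qed
  have "(\<integral>\<^sup>+ \<omega>. kac_pairing X (\<lambda>v. 1 + norm v powr p) t \<omega> \<partial>M)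
      = (\<integral>\<^sup>+ \<omega>. (\<Sum>n. phiM p t (X n \<omega>) * indicator {ereal t<..} (fst (X (Suc n) \<omega>))) \<partial>M)"
    unfolding eq ..
  also have "\<dots> \<le> hfun p c \<rho> s t (ereal s, 1, \<lambda>_. (v0, True))"
    by (rule telescoping[OF P phiM_measurable gM_measurable hfun_measurable[OF env s0]])
       (rule onestep_moment[OF ck lbp env s0 fin c0 HM1 M0 M2])
  also have "\<dots> = ennreal ((1 + norm v0 powr p) * exp (c * enn2real (II p \<rho> s t)))"
    using st by (rule hfun_x0)
  finally show ?thesis .
qed


lemma env_II_finite:
  fixes \<rho> :: "real \<Rightarrow> 'a::euclidean_space measure"
  assumes env: "environment \<rho>" and s0: "0 \<le> s"
  shows "II 2 \<rho> s t < \<infinity>"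
proof (cases "s \<le> t")
  case False
  then show ?thesis by (simp add: II_def)
next
  case True
  have t0: "0 \<le> t" using True s0 by simp
  define N3 where "N3 r = (\<integral>\<^sup>+ v. ennreal (norm v ^ 3) \<partial>\<rho> r)" for r
  have N3m[measurable]: "(\<lambda>r. indicator {0..} r * N3 r) \<in> borel_measurable borel"
    unfolding N3_def by (rule env_integral_measurable[OF env]) measurable
  have envt: "(\<integral>\<^sup>+ r. N3 r * indicator {0..t} r \<partial>lborel) < \<infinity>"
    using env t0 unfolding environment_def N3_def by auto
  have momb: "mom 2 \<rho> r \<le> 1 + N3 r" if "0 \<le> r" for r
  proof -
    have "mom 2 \<rho> r = (\<integral>\<^sup>+ w. 1 + ennreal (norm w ^ 3) \<partial>\<rho> r)"
      unfolding mom_def by (intro nn_integral_cong) (simp add: ennreal_plus)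
    also have "\<dots> = emeasure (\<rho> r) (space (\<rho> r)) + N3 r"
      unfolding N3_def by (subst nn_integral_add) (auto simp: measurable_cong_sets[OF env_sets[OF env] refl])
    also have "\<dots> \<le> 1 + N3 r" using env_mass[OF env that] by (intro add_right_mono)
    finally show ?thesis .
  qed
  have "II 2 \<rho> s t \<le> (\<integral>\<^sup>+ r. 1 * indicator {0..t} r + (indicator {0..} r * N3 r) * indicator {0..t} r \<partial>lborel)"
    unfolding II_def
  proof (intro nn_integral_mono)
    fix r
    show "mom 2 \<rho> r * indicator {s..t} r \<le> 1 * indicator {0..t} r + (indicator {0..} r * N3 r) * indicator {0..t} r"
    proof (cases "r \<in> {s..t}")
      case True
      then have "0 \<le> r" using s0 by simp
      then show ?thesis using True momb[of r] s0 by (simp add: indicator_def)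
    qed simp
  qed
  also have "(\<integral>\<^sup>+ r. 1 * indicator {0..t} r + (indicator {0..} r * N3 r) * indicator {0..t} r \<partial>lborel)
      = emeasure lborel {0..t} + (\<integral>\<^sup>+ r. N3 r * indicator {0..t} r \<partial>lborel)"
  proof -
    have e1: "(\<integral>\<^sup>+ r. 1 * indicator {0..t} r + (indicator {0..} r * N3 r) * indicator {0..t} r \<partial>lborel)
      = (\<integral>\<^sup>+ r. 1 * indicator {0..t} r \<partial>lborel) + (\<integral>\<^sup>+ r. (indicator {0..} r * N3 r) * indicator {0..t} r \<partial>lborel)"
      by (rule nn_integral_add) measurable
    have e2: "(\<integral>\<^sup>+ r. (indicator {0..} r * N3 r) * indicator {0..t} r \<partial>lborel) = (\<integral>\<^sup>+ r. N3 r * indicator {0..t} r \<partial>lborel)"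
      by (rule int_restrict0[symmetric, of 0]) auto
    have e3: "(\<integral>\<^sup>+ r. 1 * indicator {0..t} r \<partial>lborel) = emeasure lborel {0..t}" by simp
    show ?thesis unfolding e1 e2 e3 ..
  qed
  also have "\<dots> < \<infinity>" using envt t0 by simp
  finally show ?thesis .
qed

lemma fin_sum_event:
  assumes "(\<Sum>n. (indicator A (a n) :: ennreal)) \<noteq> \<infinity>"
  shows "eventually (\<lambda>n. a n \<notin> A) sequentially"
proof -
  have "(\<Sum>n. ennreal (indicator A (a n))) \<noteq> top" using assms by (simp add: ennreal_indicator)
  then have "summable (\<lambda>n. indicator A (a n) :: real)"
    by (rule summable_suminf_not_top[rotated]) simp
  then have "(\<lambda>n. indicator A (a n) :: real) \<longlonglongrightarrow> 0" by (rule summable_LIMSEQ_zero)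
  then have "eventually (\<lambda>n. (indicator A (a n) :: real) < 1) sequentially"
    by (rule order_tendstoD) simp
  then show ?thesis by eventually_elim (auto simp: indicator_def)
qed

lemma nonexplosion:
  fixes B :: "'a::euclidean_space \<Rightarrow> 'a measure" and \<rho> :: "real \<Rightarrow> 'a measure"
  assumes ck: "collision_kernel B" and lbp: "LBP B" and env: "environment \<rho>"
    and s0: "0 \<le> s" and P: "lin_kac_process B \<rho> s v0 M X"
  shows "AE \<omega> in M. (\<lambda>n. fst (X n \<omega>)) \<longlonglongrightarrow> \<infinity>"
proof -
  interpret prob_space M using lkp_prob[OF P] .
  note Xm[measurable] = lkp_meas[OF P]
  have each: "AE \<omega> in M. eventually (\<lambda>n. ereal (s + real N) < fst (X (Suc n) \<omega>)) sequentially" for N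
  proof -
    define t where "t = s + real N"
    have fin: "II 2 \<rho> s t < \<infinity>" by (rule env_II_finite[OF env s0])
    have "(\<integral>\<^sup>+ \<omega>. (\<Sum>n. 1 * indicator {..ereal t} (fst (X (Suc n) \<omega>))) \<partial>M) \<le> hfun 2 11 \<rho> s t (ereal s, 1, \<lambda>_. (v0, True))"
      by (rule telescoping[OF P _ gN_measurable hfun_measurable[OF env s0] onestep_nonexp[OF ck lbp env s0 fin]]) simp
    also have "\<dots> < \<infinity>" by (auto simp: hfun_def indicator_def)
    finally have "(\<integral>\<^sup>+ \<omega>. (\<Sum>n. indicator {..ereal t} (fst (X (Suc n) \<omega>)) :: ennreal) \<partial>M) \<noteq> \<infinity>" by simp
    then have "AE \<omega> in M. (\<Sum>n. indicator {..ereal t} (fst (X (Suc n) \<omega>)) :: ennreal) \<noteq> \<infinity>"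
      by (intro nn_integral_PInf_AE) measurable
    then show ?thesis
    proof eventually_elim
      case (elim \<omega>)
      from fin_sum_event[OF elim] show ?case unfolding t_def by (simp add: not_le)
    qed
  qed
  then have "AE \<omega> in M. \<forall>N. eventually (\<lambda>n. ereal (s + real N) < fst (X (Suc n) \<omega>)) sequentially"
    by (simp add: AE_all_countable)
  then show ?thesis
  proof eventually_elim
    case (elim \<omega>)
    show ?case unfolding tendsto_PInfty
    proof
      fix r :: real
      obtain N :: nat where N: "r - s < real N" using reals_Archimedean2 by blast
      have "eventually (\<lambda>n. ereal (s + real N) < fst (X (Suc n) \<omega>)) sequentially" using elim by blast
      then have "eventually (\<lambda>n. ereal r < fst (X (Suc n) \<omega>)) sequentially"
        by eventually_elim (use N in \<open>auto intro: le_less_trans[rotated]\<close>)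
      then show "eventually (\<lambda>n. ereal r < fst (X n \<omega>)) sequentially"
        by (rule eventually_sequentially_Suc[THEN iffD1])
    qed
  qed
qed

theorem proposition4p1:
  assumes "DIM('a::euclidean_space) \<ge> 2"
  shows "(\<forall>(B :: 'a \<Rightarrow> 'a measure) \<rho> s v0 (M :: 'w measure) X.
            collision_kernel B \<and> LBP B \<and> environment \<rho> \<and> s \<ge> 0 \<and>
            lin_kac_process B \<rho> s v0 M X \<longrightarrow>
            (AE \<omega> in M. (\<lambda>n. fst (X n \<omega>)) \<longlonglongrightarrow> \<infinity>))
       \<and> (\<forall>p::real. p \<ge> 2 \<longrightarrow> (\<exists>c::real.
            \<forall>(B :: 'a \<Rightarrow> 'a measure) \<rho> s v0 (M :: 'w measure) X t.
            collision_kernel B \<and> LBP B \<and> environment \<rho> \<and> s \<ge> 0 \<and>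
            lin_kac_process B \<rho> s v0 M X \<and> t \<ge> s \<longrightarrow>
            kac_moment_bound B \<rho> s v0 M X p c t))
       \<and> (\<forall>(B :: 'a \<Rightarrow> 'a measure) \<rho> s v0 (M :: 'w measure) X t.
            collision_kernel B \<and> LBP B \<and> environment \<rho> \<and> s \<ge> 0 \<and>
            lin_kac_process B \<rho> s v0 M X \<and> t \<ge> s \<longrightarrow>
            kac_moment_bound B \<rho> s v0 M X 2 8 t)"
proof (intro conjI allI impI)
  fix B :: "'a \<Rightarrow> 'a measure" and \<rho> s v0 and M :: "'w measure" and X
  assume H: "collision_kernel B \<and> LBP B \<and> environment \<rho> \<and> s \<ge> 0 \<and> lin_kac_process B \<rho> s v0 M X"
  then show "AE \<omega> in M. (\<lambda>n. fst (X n \<omega>)) \<longlonglongrightarrow> \<infinity>"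
    using nonexplosion by blast
next
  fix p :: real assume p: "2 \<le> p"
  have cp0: "0 \<le> cp p" unfolding cp_def using p by (intro add_nonneg_nonneg mult_nonneg_nonneg) auto
  show "\<exists>c::real. \<forall>(B :: 'a \<Rightarrow> 'a measure) \<rho> s v0 (M :: 'w measure) X t.
            collision_kernel B \<and> LBP B \<and> environment \<rho> \<and> s \<ge> 0 \<and>
            lin_kac_process B \<rho> s v0 M X \<and> t \<ge> s \<longrightarrow>
            kac_moment_bound B \<rho> s v0 M X p c t"
  proof (intro exI[of _ "cp p"] allI impI)
    fix B :: "'a \<Rightarrow> 'a measure" and \<rho> s v0 and M :: "'w measure" and X t
    assume H: "collision_kernel B \<and> LBP B \<and> environment \<rho> \<and> s \<ge> 0 \<and> lin_kac_process B \<rho> s v0 M X \<and> t \<ge> s"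
    have h1: "\<And>v w \<sigma>. norm \<sigma> = 1 \<Longrightarrow> Wt p (vpost v w \<sigma>) + Wt p (vpost_star v w \<sigma>) + Wt p w - Wt p v
        \<le> (\<lambda>v w. Mp p (norm v) (norm w)) v (w::'a)"
      using p by (simp add: inc_gen)
    have h2: "\<And>v w. 0 \<le> (\<lambda>v w. Mp p (norm v) (norm w)) v (w::'a)" using p by (simp add: Mp_nonneg)
    have h3: "\<And>v w. 2 * norm (v - w) * (\<lambda>v w. Mp p (norm v) (norm w)) v (w::'a) \<le> cp p * Wt p v * (1 + norm w powr (p + 1))"
      using p by (simp add: rate_gen)
    show "kac_moment_bound B \<rho> s v0 M X p (cp p) t"
      unfolding kac_moment_bound_def Let_def
    proof
      assume fin: "(\<integral>\<^sup>+ r \<in> {s..t}. (\<integral>\<^sup>+ v. ennreal (1 + norm v powr (p + 1)) \<partial>\<rho> r) \<partial>lborel) < \<infinity>"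
      then have fin': "II p \<rho> s t < \<infinity>" by (simp add: II_def mom_def)
      have "(\<integral>\<^sup>+ \<omega>. kac_pairing X (\<lambda>v. 1 + norm v powr p) t \<omega> \<partial>M)
          \<le> ennreal ((1 + norm v0 powr p) * exp (cp p * enn2real (II p \<rho> s t)))"
        using H by (intro moment_general[OF _ _ _ _ _ _ fin' cp0 h1 h2 h3]) auto
      then show "(\<integral>\<^sup>+ \<omega>. kac_pairing X (\<lambda>v. 1 + norm v powr p) t \<omega> \<partial>M)
          \<le> ennreal ((1 + norm v0 powr p) * exp (cp p * enn2real (\<integral>\<^sup>+ r \<in> {s..t}. (\<integral>\<^sup>+ v. ennreal (1 + norm v powr (p + 1)) \<partial>\<rho> r) \<partial>lborel)))"
        by (simp add: II_def mom_def)
    qed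
  qed
next
  fix B :: "'a \<Rightarrow> 'a measure" and \<rho> s v0 and M :: "'w measure" and X t
  assume H: "collision_kernel B \<and> LBP B \<and> environment \<rho> \<and> s \<ge> 0 \<and> lin_kac_process B \<rho> s v0 M X \<and> t \<ge> s"
  have h1: "\<And>v w \<sigma>. norm \<sigma> = 1 \<Longrightarrow> Wt 2 (vpost v w \<sigma>) + Wt 2 (vpost_star v w \<sigma>) + Wt 2 w - Wt 2 v
      \<le> (\<lambda>v w. 2 + 2 * norm w ^ 2) v (w::'a)"
    by (rule inc_2)
  have h2: "\<And>v w. 0 \<le> (\<lambda>v w. 2 + 2 * norm w ^ 2) v (w::'a)" by simp
  have h3: "\<And>v w. 2 * norm (v - w) * (\<lambda>v w. 2 + 2 * norm w ^ 2) v (w::'a) \<le> 8 * Wt 2 v * (1 + norm w powr (2 + 1))"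
    by (rule rate_2)
  have c8: "0 \<le> (8::real)" by simp
  show "kac_moment_bound B \<rho> s v0 M X 2 8 t"
    unfolding kac_moment_bound_def Let_def
  proof
    assume fin: "(\<integral>\<^sup>+ r \<in> {s..t}. (\<integral>\<^sup>+ v. ennreal (1 + norm v powr (2 + 1)) \<partial>\<rho> r) \<partial>lborel) < \<infinity>"
    then have fin': "II 2 \<rho> s t < \<infinity>" by (simp add: II_def mom_def)
    have "(\<integral>\<^sup>+ \<omega>. kac_pairing X (\<lambda>v. 1 + norm v powr 2) t \<omega> \<partial>M)
        \<le> ennreal ((1 + norm v0 powr 2) * exp (8 * enn2real (II 2 \<rho> s t)))"
      using H by (intro moment_general[OF _ _ _ _ _ _ fin' c8 h1 h2 h3]) auto
    then show "(\<integral>\<^sup>+ \<omega>. kac_pairing X (\<lambda>v. 1 + norm v powr 2) t \<omega> \<partial>M)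
        \<le> ennreal ((1 + norm v0 powr 2) * exp (8 * enn2real (\<integral>\<^sup>+ r \<in> {s..t}. (\<integral>\<^sup>+ v. ennreal (1 + norm v powr (2 + 1)) \<partial>\<rho> r) \<partial>lborel)))"
      by (simp add: II_def mom_def)
  qed
qed


end
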